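(* (i) The locus of the incenter $X_1$ (triangle center function $h\equiv 1$) over the 3-periodics of $E$ is the ellipse $x^2/a_1^2+y^2/b_1^2=1$ with $a_1=\dfrac{\delta-b^2}{a}$, $b_1=\dfrac{a^2-\delta}{b}$. (ii) The set of all excenters of all 3-periodics of $E$ is the ellipse $x^2/a_e^2+y^2/b_e^2=1$ with $a_e=\dfrac{b^2+\delta}{a}$, $b_e=\dfrac{a^2+\delta}{b}$.
   Context: Fix real numbers $a>b>0$, let $E$ be the ellipse $x^2/a^2+y^2/b^2=1$ and $\delta=\sqrt{a^4-a^2b^2+b^4}$. A 3-periodic is a non-degenerate triangle $P_1P_2P_3$ with all vertices on $E$ such that at each vertex $P_j$ the normal line to $E$ at $P_j$ bisects the interior angle of the triangle at $P_j$. For a triangle let $s_1=|P_2P_3|$, $s_2=|P_3P_1|$, $s_3=|P_1P_2|$. The point with trilinear coordinates $p:q:r$ is the Cartesian point $\dfrac{p s_1P_1+q s_2P_2+r s_3P_3}{p s_1+q s_2+r s_3}$. The incenter has trilinears $1:1:1$; the three excenters have trilinears $-1:1:1$, $1:-1:1$, $1:1:-1$. The locus of a center is the set of its positions over all 3-periodics. *)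

theory Defs
  imports "HOL-Analysis.Analysis"
begin

type_synonym pt = "real \<times> real"

definition on_ellipse :: "real \<Rightarrow> real \<Rightarrow> pt \<Rightarrow> bool" where
  "on_ellipse a b P \<longleftrightarrow> (fst P)^2 / a^2 + (snd P)^2 / b^2 = 1"

definition cross2 :: "pt \<Rightarrow> pt \<Rightarrow> real" where
  "cross2 u v = fst u * snd v - snd u * fst v"

definition ell_normal :: "real \<Rightarrow> real \<Rightarrow> pt \<Rightarrow> pt" where
  "ell_normal a b P = (fst P / a^2, snd P / b^2)"

definition non_degenerate :: "pt \<Rightarrow> pt \<Rightarrow> pt \<Rightarrow> bool" where
  "non_degenerate P1 P2 P3 \<longleftrightarrow> cross2 (P2 - P1) (P3 - P1) \<noteq> 0"

(* the internal angle bisector at P (of the angle between rays P->Q and P->R)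
   has direction (Q-P)/|Q-P| + (R-P)/|R-P|; the normal line at P bisects the
   interior angle iff this direction is parallel to the normal *)
definition normal_bisects :: "real \<Rightarrow> real \<Rightarrow> pt \<Rightarrow> pt \<Rightarrow> pt \<Rightarrow> bool" where
  "normal_bisects a b P Q R \<longleftrightarrow>
     cross2 ((Q - P) /\<^sub>R norm (Q - P) + (R - P) /\<^sub>R norm (R - P)) (ell_normal a b P) = 0"

definition three_periodic :: "real \<Rightarrow> real \<Rightarrow> pt \<Rightarrow> pt \<Rightarrow> pt \<Rightarrow> bool" where
  "three_periodic a b P1 P2 P3 \<longleftrightarrow>
     non_degenerate P1 P2 P3 \<and>
     on_ellipse a b P1 \<and> on_ellipse a b P2 \<and> on_ellipse a b P3 \<and>
     normal_bisects a b P1 P2 P3 \<and> normal_bisects a b P2 P3 P1 \<and>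
     normal_bisects a b P3 P1 P2"

definition trilinear_point :: "real \<Rightarrow> real \<Rightarrow> real \<Rightarrow> pt \<Rightarrow> pt \<Rightarrow> pt \<Rightarrow> pt" where
  "trilinear_point p q r P1 P2 P3 =
     (let s1 = dist P2 P3; s2 = dist P3 P1; s3 = dist P1 P2 in
      (1 / (p * s1 + q * s2 + r * s3)) *\<^sub>R
        ((p * s1) *\<^sub>R P1 + (q * s2) *\<^sub>R P2 + (r * s3) *\<^sub>R P3))"

definition incenter :: "pt \<Rightarrow> pt \<Rightarrow> pt \<Rightarrow> pt" where
  "incenter = trilinear_point 1 1 1"

definition excenters :: "pt \<Rightarrow> pt \<Rightarrow> pt \<Rightarrow> pt set" where
  "excenters P1 P2 P3 = {trilinear_point (-1) 1 1 P1 P2 P3,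
                         trilinear_point 1 (-1) 1 P1 P2 P3,
                         trilinear_point 1 1 (-1) P1 P2 P3}"

definition ellipse_set :: "real \<Rightarrow> real \<Rightarrow> pt set" where
  "ellipse_set A B = {P. on_ellipse A B P}"

end

theory Submission
  imports Defs
begin


lemma cayley: fixes p q r x1 y1 x2 y2 x3 y3 :: real
  assumes "x1^2+y1^2=1" "x2^2+y2^2=1" "x3^2+y3^2=1" "p+q=2"
    "p*x1*x2+q*y1*y2 = r" "p*x1*x3+q*y1*y3 = r" "p*x2*x3+q*y2*y3=r"
  shows "(2*r+p*q) * (p*x1^2+q*y1^2 - r) * (p^2*x1^2+q^2*y1^2) * ((x2-x3)^2+(y2-y3)^2) = 0"
  using assms by algebra



lemma Gid: fixes p q x1 y1 x2 y2 :: real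
  assumes "x1^2+y1^2=1" "x2^2+y2^2=1" "p+q=2" "p*x1*x2+q*y1*y2 = -(p*q/2)"
  shows "4*p^2*x1^2*x2^2*(y2-y1)^2 + 4*q^2*y1^2*y2^2*(x2-x1)^2 = p^2*q^2*(x1*y2-y1*x2)^2"
  using assms by algebra

lemma cons_id: fixes p q r h x1 y1 :: real
  assumes "x1^2+y1^2=1" "p+q=2" "h^2 = p^2*x1^2+q^2*y1^2 - r^2" "r = -(p*q/2)"
  shows "p*(r^2*(p*x1)^2 - h^2*(q*y1)^2) + q*(r^2*(q*y1)^2 - h^2*(p*x1)^2) = r*(p^2*x1^2+q^2*y1^2)^2"
  using assms by algebra

lemma circ_id: fixes x1 y1 x2 y2 x3 y3 :: real
  assumes "x1^2+y1^2=1" "x2^2+y2^2=1" "x3^2+y3^2=1"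
  shows "4*((x2-x1)*(y3-y1) - (y2-y1)*(x3-x1))^2 = ((x1-x2)^2+(y1-y2)^2)*((x2-x3)^2+(y2-y3)^2)*((x3-x1)^2+(y3-y1)^2)"
  using assms by algebra



lemma norm_pt: "norm ((x,y)::pt) = sqrt(x^2+y^2)"
  by (simp add: norm_Pair)

lemma bis_alg:
  fixes u1 u2 w1 w2 n1 n2 :: real
  assumes "u1^2+u2^2=1" "w1^2+w2^2=1" "u1*w2 - u2*w1 \<noteq> 0"
  shows "(u1+w1)*n2 - (u2+w2)*n1 = 0 \<longleftrightarrow> u1*n1+u2*n2 = w1*n1+w2*n2"
proof -
  have id: "((u1+w1)*(u1-w1)+(u2+w2)*(u2-w2))*((u1+w1)*n1+(u2+w2)*n2) + ((u1+w1)*(u2-w2)-(u2+w2)*(u1-w1))*((u1+w1)*n2-(u2+w2)*n1) = ((u1+w1)^2+(u2+w2)^2)*((u1-w1)*n1+(u2-w2)*n2)"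
    by algebra
  have sd: "(u1+w1)*(u1-w1)+(u2+w2)*(u2-w2) = 0" using assms(1,2) by algebra
  have cr: "(u1+w1)*(u2-w2)-(u2+w2)*(u1-w1) = -2*(u1*w2 - u2*w1)" by algebra
  have crn: "(u1+w1)*(u2-w2)-(u2+w2)*(u1-w1) \<noteq> 0" using cr assms(3) by simp
  have ss: "(u1+w1)^2+(u2+w2)^2 \<noteq> 0"
  proof
    assume "(u1+w1)^2+(u2+w2)^2 = 0"
    then have "u1+w1 = 0" "u2+w2=0" by (simp_all add: sum_power2_eq_zero_iff)
    then show False using crn by simp
  qed
  have key: "((u1+w1)*(u2-w2)-(u2+w2)*(u1-w1))*((u1+w1)*n2-(u2+w2)*n1) = ((u1+w1)^2+(u2+w2)^2)*((u1-w1)*n1+(u2-w2)*n2)"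
    using id sd by simp
  show ?thesis
  proof
    assume "(u1+w1)*n2 - (u2+w2)*n1 = 0"
    then have "((u1+w1)^2+(u2+w2)^2)*((u1-w1)*n1+(u2-w2)*n2) = 0" using key by simp
    then have "(u1-w1)*n1+(u2-w2)*n2 = 0" using ss mult_eq_0_iff by blast
    then show "u1*n1+u2*n2 = w1*n1+w2*n2" by argo
  next
    assume "u1*n1+u2*n2 = w1*n1+w2*n2"
    then have "(u1-w1)*n1+(u2-w2)*n2 = 0" by argo
    then have "((u1+w1)*(u2-w2)-(u2+w2)*(u1-w1))*((u1+w1)*n2-(u2+w2)*n1) = 0" using key by simp
    then show "(u1+w1)*n2 - (u2+w2)*n1 = 0" using crn by simp
  qed
qed

definition sd :: "real \<Rightarrow> real \<Rightarrow> real \<Rightarrow> real \<Rightarrow> real \<Rightarrow> real \<Rightarrow> real" where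
  "sd a b x1 y1 x2 y2 = sqrt((a*x1-a*x2)^2+(b*y1-b*y2)^2)"
definition gn :: "real \<Rightarrow> real \<Rightarrow> real \<Rightarrow> real \<Rightarrow> real" where
  "gn x1 y1 x2 y2 = 1 - x1*x2 - y1*y2"

lemma sd_sym: "sd a b x1 y1 x2 y2 = sd a b x2 y2 x1 y1"
  unfolding sd_def by (simp add: power2_commute)
lemma gn_sym: "gn x1 y1 x2 y2 = gn x2 y2 x1 y1"
  unfolding gn_def by (simp add: mult.commute)

lemma sd_pos:
  assumes "a>0" "b>0" "(x1,y1) \<noteq> (x2,y2)"
  shows "sd a b x1 y1 x2 y2 > 0"
proof -
  have "(a*x1-a*x2)^2+(b*y1-b*y2)^2 \<noteq> 0"
  proof
    assume "(a*x1-a*x2)^2+(b*y1-b*y2)^2 = 0"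
    then have "a*x1-a*x2 = 0" "b*y1-b*y2=0" by (simp_all add: sum_power2_eq_zero_iff)
    then have "x1=x2" "y1=y2" using assms by (simp_all add: right_diff_distrib[symmetric])
    then show False using assms by simp
  qed
  then have "(a*x1-a*x2)^2+(b*y1-b*y2)^2 > 0"
    by (metis add_nonneg_nonneg order_le_less zero_le_power2)
  then show ?thesis unfolding sd_def by simp
qed

lemma ncross_distinct:
  fixes x1 y1 x2 y2 x3 y3 :: real
  assumes "(x2-x1)*(y3-y1) - (y2-y1)*(x3-x1) \<noteq> 0"
  shows "(x1,y1) \<noteq> (x2,y2)" "(x1,y1) \<noteq> (x3,y3)" "(x2,y2) \<noteq> (x3,y3)"
proof -
  show "(x1,y1) \<noteq> (x2,y2)"
  proof
    assume "(x1,y1) = (x2,y2)" then show False using assms by simp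
  qed
  show "(x1,y1) \<noteq> (x3,y3)"
  proof
    assume "(x1,y1) = (x3,y3)" then show False using assms by simp
  qed
  show "(x2,y2) \<noteq> (x3,y3)"
  proof
    assume "(x2,y2) = (x3,y3)" then show False using assms by (simp add: algebra_simps)
  qed
qed

lemma bis_norm:
  assumes "a>0" "b>0" "x1^2+y1^2=1" "(x2-x1)*(y3-y1) - (y2-y1)*(x3-x1) \<noteq> 0"
  shows "normal_bisects a b (a*x1,b*y1) (a*x2,b*y2) (a*x3,b*y3) \<longleftrightarrow>
     gn x1 y1 x2 y2 * sd a b x1 y1 x3 y3 = gn x1 y1 x3 y3 * sd a b x1 y1 x2 y2"
proof -
  define L1 where "L1 = sd a b x2 y2 x1 y1"
  define L2 where "L2 = sd a b x3 y3 x1 y1"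
  have d: "(x1,y1) \<noteq> (x2,y2)" "(x1,y1) \<noteq> (x3,y3)" using ncross_distinct[OF assms(4)] by auto
  have L1p: "L1 > 0" unfolding L1_def using sd_pos[OF assms(1,2)] d by (metis sd_sym)
  have L2p: "L2 > 0" unfolding L2_def using sd_pos[OF assms(1,2)] d by (metis sd_sym)
  have n1: "norm ((a*x2,b*y2) - (a*x1,b*y1)) = L1" unfolding L1_def sd_def by (simp add: norm_pt)
  have n2: "norm ((a*x3,b*y3) - (a*x1,b*y1)) = L2" unfolding L2_def sd_def by (simp add: norm_pt)
  define u1 where "u1 = (a*x2-a*x1)/L1"
  define u2 where "u2 = (b*y2-b*y1)/L1"
  define w1 where "w1 = (a*x3-a*x1)/L2"
  define w2 where "w2 = (b*y3-b*y1)/L2"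
  have L1sq: "L1^2 = (a*x2-a*x1)^2+(b*y2-b*y1)^2" unfolding L1_def sd_def by simp
  have L2sq: "L2^2 = (a*x3-a*x1)^2+(b*y3-b*y1)^2" unfolding L2_def sd_def by simp
  have "u1^2+u2^2 = ((a*x2-a*x1)^2+(b*y2-b*y1)^2)/L1^2" unfolding u1_def u2_def
    by (simp add: power_divide add_divide_distrib)
  then have uu: "u1^2+u2^2 = 1" using L1p by (simp add: L1sq[symmetric])
  have "w1^2+w2^2 = ((a*x3-a*x1)^2+(b*y3-b*y1)^2)/L2^2" unfolding w1_def w2_def
    by (simp add: power_divide add_divide_distrib)
  then have ww: "w1^2+w2^2 = 1" using L2p by (simp add: L2sq[symmetric])
  have cr: "u1*w2 - u2*w1 = a*b*((x2-x1)*(y3-y1) - (y2-y1)*(x3-x1))/(L1*L2)"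
    unfolding u1_def u2_def w1_def w2_def using L1p L2p by (simp add: field_simps)
  have crn: "u1*w2 - u2*w1 \<noteq> 0" unfolding cr using assms L1p L2p by simp
  have "u1*(a*x1/a^2) + u2*(b*y1/b^2) = (x1*x2 + y1*y2 - (x1^2+y1^2))/L1"
    unfolding u1_def u2_def using assms(1,2) L1p by (simp add: field_simps power2_eq_square)
  then have un: "u1*(a*x1/a^2) + u2*(b*y1/b^2) = - gn x1 y1 x2 y2 / L1"
    using assms(3) unfolding gn_def by (simp add: minus_divide_left)
  have "w1*(a*x1/a^2) + w2*(b*y1/b^2) = (x1*x3 + y1*y3 - (x1^2+y1^2))/L2"
    unfolding w1_def w2_def using assms(1,2) L2p by (simp add: field_simps power2_eq_square)
  then have wn: "w1*(a*x1/a^2) + w2*(b*y1/b^2) = - gn x1 y1 x3 y3 / L2"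
    using assms(3) unfolding gn_def by (simp add: minus_divide_left)
  have nb: "normal_bisects a b (a*x1,b*y1) (a*x2,b*y2) (a*x3,b*y3) \<longleftrightarrow>
      (u1+w1)*(b*y1/b^2) - (u2+w2)*(a*x1/a^2) = 0"
    unfolding normal_bisects_def n1 n2 cross2_def ell_normal_def u1_def u2_def w1_def w2_def
    by (simp add: divide_inverse mult.commute)
  also have "\<dots> \<longleftrightarrow> - gn x1 y1 x2 y2 / L1 = - gn x1 y1 x3 y3 / L2"
    using bis_alg[OF uu ww crn, of "b*y1/b^2" "a*x1/a^2"] un wn by simp
  also have "\<dots> \<longleftrightarrow> gn x1 y1 x2 y2 * L2 = gn x1 y1 x3 y3 * L1"
    using L1p L2p by (simp add: field_simps)
  finally show ?thesis unfolding L1_def L2_def by (metis sd_sym)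
qed

definition dl :: "real \<Rightarrow> real \<Rightarrow> real" where "dl a b = sqrt (a^4 - a^2*b^2 + b^4)"
definition pp :: "real \<Rightarrow> real \<Rightarrow> real" where "pp a b = 2*(a^2 - dl a b)/(a^2-b^2)"
definition qq :: "real \<Rightarrow> real \<Rightarrow> real" where "qq a b = 2*(dl a b - b^2)/(a^2-b^2)"
definition t0 :: "real \<Rightarrow> real \<Rightarrow> real" where "t0 a b = (2*dl a b - (a^2+b^2))/(a^2-b^2)^2"

lemma dl_facts:
  assumes "b>0" "a>b"
  shows "(dl a b)^2 = a^4 - a^2*b^2 + b^4" "dl a b < a^2" "dl a b > b^2" "2*dl a b > a^2+b^2"
proof -
  have ab: "a^2 > b^2" using assms by (simp add: power_strict_mono)
  have pos: "a^4 - a^2*b^2 + b^4 > 0"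
  proof -
    have "a^4 - a^2*b^2 = a^2*(a^2-b^2)" by algebra
    moreover have "a^2*(a^2-b^2) > 0" using ab assms by simp
    moreover have "b^4 > 0" using assms by simp
    ultimately show ?thesis by linarith
  qed
  have "0 \<le> a^4 - a^2*b^2 + b^4" using pos by linarith
  then show d2: "(dl a b)^2 = a^4 - a^2*b^2 + b^4" unfolding dl_def by simp
  have d0: "dl a b \<ge> 0" unfolding dl_def using pos by simp
  have "(dl a b)^2 < (a^2)^2"
  proof -
    have "(a^2)^2 - (dl a b)^2 = b^2*(a^2-b^2)" unfolding d2 by algebra
    moreover have "b^2*(a^2-b^2) > 0" using ab assms by simp
    ultimately show ?thesis by linarith
  qed
  then show "dl a b < a^2" using d0 by (smt (verit) power_mono zero_le_power2)
  have "(dl a b)^2 > (b^2)^2"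
  proof -
    have "(dl a b)^2 - (b^2)^2 = a^2*(a^2-b^2)" unfolding d2 by algebra
    moreover have "a^2*(a^2-b^2) > 0" using ab assms by simp
    ultimately show ?thesis by linarith
  qed
  then show "dl a b > b^2" using d0 by (smt (verit) power_mono zero_le_power2)
  have "(2*dl a b)^2 > (a^2+b^2)^2"
  proof -
    have "(2*dl a b)^2 - (a^2+b^2)^2 = 3*(a^2-b^2)^2" unfolding power_mult_distrib d2 by algebra
    moreover have "3*(a^2-b^2)^2 > 0" using ab by simp
    ultimately show ?thesis by linarith
  qed
  then show "2*dl a b > a^2+b^2" using d0 by (smt (verit) power_mono zero_le_power2)
qed

lemma pq_facts:
  assumes "b>0" "a>b"
  shows "pp a b > 0" "qq a b > 0" "pp a b + qq a b = 2" "t0 a b > 0"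
    "1 - t0 a b*(a^2-b^2) = pp a b" "1 + t0 a b*(a^2-b^2) = qq a b"
    "1 - t0 a b*(a^2+b^2) = -(pp a b * qq a b/2)"
    "qq a b * ((b^2 + dl a b)/a) = 2*a" "pp a b * ((a^2 + dl a b)/b) = 2*b"
    "(dl a b - b^2)/a = qq a b*(a^2-b^2)/(2*a)" "(a^2 - dl a b)/b = pp a b*(a^2-b^2)/(2*b)"
proof -
  note d = dl_facts[OF assms]
  define e where "e = a^2-b^2"
  define dd where "dd = dl a b"
  have e: "e > 0" unfolding e_def using assms by (simp add: power_strict_mono)
  have pp: "pp a b = 2*(a^2 - dd)/e" unfolding pp_def e_def dd_def by simp
  have qq: "qq a b = 2*(dd - b^2)/e" unfolding qq_def e_def dd_def by simp
  have t0: "t0 a b = (2*dd - (a^2+b^2))/e^2" unfolding t0_def e_def dd_def by simp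
  have d2: "dd^2 = a^4 - a^2*b^2 + b^4" using d(1) unfolding dd_def .
  show "pp a b > 0" unfolding pp using d e dd_def by simp
  show "qq a b > 0" unfolding qq using d e dd_def by simp
  have "pp a b + qq a b = (2*(a^2-dd) + 2*(dd-b^2))/e" unfolding pp qq by (simp add: diff_divide_distrib add_divide_distrib)
  also have "\<dots> = (2*e)/e" by (simp add: e_def algebra_simps)
  also have "\<dots> = 2" using e by simp
  finally show "pp a b + qq a b = 2" .
  show "t0 a b > 0" unfolding t0 using d e dd_def by simp
  show "1 - t0 a b*(a^2-b^2) = pp a b" unfolding t0 pp e_def[symmetric] using e
    by (simp add: field_simps power2_eq_square) (unfold e_def, algebra)
  show "1 + t0 a b*(a^2-b^2) = qq a b" unfolding t0 qq e_def[symmetric] using e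
    by (simp add: field_simps power2_eq_square) (unfold e_def, algebra)
  have "(1 - t0 a b*(a^2+b^2)) * e^2 = -(pp a b * qq a b/2) * e^2"
    unfolding t0 pp qq using e by (simp add: field_simps power2_eq_square) (simp add: e_def, use d2 in algebra)
  moreover have ne: "e^2 \<noteq> 0" using e by simp
  ultimately show "1 - t0 a b*(a^2+b^2) = -(pp a b * qq a b/2)" using mult_right_cancel[OF ne] by blast
  show "qq a b * ((b^2 + dl a b)/a) = 2*a" unfolding qq dd_def[symmetric] using e assms
    by (simp add: field_simps) (simp add: e_def, use d2 in algebra)
  show "pp a b * ((a^2 + dl a b)/b) = 2*b" unfolding pp dd_def[symmetric] using e assms
    by (simp add: field_simps) (simp add: e_def, use d2 in algebra)
  show "(dl a b - b^2)/a = qq a b*(a^2-b^2)/(2*a)" unfolding qq e_def[symmetric] dd_def[symmetric]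
    using e assms by (simp add: field_simps)
  show "(a^2 - dl a b)/b = pp a b*(a^2-b^2)/(2*b)" unfolding pp e_def[symmetric] dd_def[symmetric]
    using e assms by (simp add: field_simps)
qed




lemma chord:
  assumes "x1^2+y1^2=1" "x2^2+y2^2=1"
  shows "(sd a b x1 y1 x2 y2)^2 = gn x1 y1 x2 y2 * ((a^2+b^2) - (a^2-b^2)*(x1*x2-y1*y2))"
proof -
  have "(sd a b x1 y1 x2 y2)^2 = (a*x1-a*x2)^2+(b*y1-b*y2)^2" unfolding sd_def by simp
  also have "\<dots> = gn x1 y1 x2 y2 * ((a^2+b^2) - (a^2-b^2)*(x1*x2-y1*y2))"
    unfolding gn_def using assms by algebra
  finally show ?thesis .
qed

lemma gn_pos:
  fixes x1 y1 x2 y2 :: real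
  assumes "x1^2+y1^2=1" "x2^2+y2^2=1" "(x1,y1) \<noteq> (x2,y2)"
  shows "gn x1 y1 x2 y2 > 0"
proof -
  have "2 * gn x1 y1 x2 y2 = (x1-x2)^2+(y1-y2)^2" unfolding gn_def using assms(1,2) by algebra
  moreover have "(x1-x2)^2+(y1-y2)^2 > 0"
  proof -
    have "(x1-x2)^2+(y1-y2)^2 \<noteq> 0" using assms(3) by (auto simp: sum_power2_eq_zero_iff)
    then show ?thesis by (metis add_nonneg_nonneg order_le_less zero_le_power2)
  qed
  ultimately show ?thesis by simp
qed

lemma K_pos:
  fixes x1 y1 x2 y2 :: real
  assumes "x1^2+y1^2=1" "x2^2+y2^2=1" "b>0" "a>b"
  shows "(a^2+b^2) - (a^2-b^2)*(x1*x2-y1*y2) > 0"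
proof -
  have "(x1*x2-y1*y2)^2 + (x1*y2+y1*x2)^2 = 1" using assms(1,2) by algebra
  then have "(x1*x2-y1*y2)^2 \<le> 1" using zero_le_power2[of "x1*y2+y1*x2"] by linarith
  then have "\<bar>x1*x2-y1*y2\<bar> \<le> 1" using abs_square_le_1 by blast
  then have "x1*x2-y1*y2 \<le> 1" by linarith
  moreover have e: "a^2-b^2 > 0" using assms by (simp add: power_strict_mono)
  ultimately have "(a^2-b^2)*(x1*x2-y1*y2) \<le> (a^2-b^2)" by (simp add: mult_left_le)
  moreover have "b^2 > 0" using assms by simp
  ultimately show ?thesis by linarith
qed


lemma pair_fwd:
  fixes x1 y1 x2 y2 c :: real
  assumes "x1^2+y1^2=1" "x2^2+y2^2=1" "(x1,y1) \<noteq> (x2,y2)" "b>0" "a>b"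
    "gn x1 y1 x2 y2 = c * sd a b x1 y1 x2 y2"
  shows "(1 - c^2*(a^2-b^2))*x1*x2 + (1 + c^2*(a^2-b^2))*y1*y2 = 1 - c^2*(a^2+b^2)"
proof -
  define K where "K = (a^2+b^2) - (a^2-b^2)*(x1*x2-y1*y2)"
  have g: "gn x1 y1 x2 y2 > 0" using gn_pos assms by blast
  have "(gn x1 y1 x2 y2)^2 = c^2 * (sd a b x1 y1 x2 y2)^2" using assms(6) by (simp add: power_mult_distrib)
  also have "\<dots> = c^2 * gn x1 y1 x2 y2 * K" using chord[OF assms(1,2)] unfolding K_def by simp
  finally have "gn x1 y1 x2 y2 * gn x1 y1 x2 y2 = gn x1 y1 x2 y2 * (c^2 * K)"
    by (simp add: power2_eq_square algebra_simps)
  then have "gn x1 y1 x2 y2 = c^2 * K" using g by simp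
  then show ?thesis unfolding gn_def K_def by algebra
qed

lemma pair_bwd:
  fixes x1 y1 x2 y2 :: real
  assumes "x1^2+y1^2=1" "x2^2+y2^2=1" "b>0" "a>b"
    "pp a b*x1*x2 + qq a b*y1*y2 = -(pp a b*qq a b/2)"
  shows "gn x1 y1 x2 y2 = sqrt (t0 a b) * sd a b x1 y1 x2 y2"
proof -
  define K where "K = (a^2+b^2) - (a^2-b^2)*(x1*x2-y1*y2)"
  note f = pq_facts[OF assms(3,4)]
  have Kp: "K > 0" unfolding K_def using K_pos assms by blast
  have "(1 - t0 a b*(a^2-b^2))*x1*x2 + (1 + t0 a b*(a^2-b^2))*y1*y2 = 1 - t0 a b*(a^2+b^2)"
    using assms(5) f(5,6,7) by simp
  then have g: "gn x1 y1 x2 y2 = t0 a b * K" unfolding gn_def K_def by algebra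
  have "(sd a b x1 y1 x2 y2)^2 = t0 a b * K^2" using chord[OF assms(1,2)] g unfolding K_def
    by (simp add: power2_eq_square)
  moreover have "0 \<le> sd a b x1 y1 x2 y2" unfolding sd_def by simp
  ultimately have "sqrt (t0 a b * K^2) = sd a b x1 y1 x2 y2"
    by (rule real_sqrt_unique)
  then have "sd a b x1 y1 x2 y2 = sqrt (t0 a b * K^2)" by simp
  also have "\<dots> = sqrt (t0 a b) * K" using Kp by (simp add: real_sqrt_mult)
  finally have "sqrt (t0 a b) * sd a b x1 y1 x2 y2 = (sqrt (t0 a b))^2 * K" by (simp add: power2_eq_square)
  also have "\<dots> = t0 a b * K" using f(4) by simp
  finally show ?thesis using g by simp
qed



lemma fwd_core:
  fixes x1 y1 x2 y2 x3 y3 :: real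
  assumes ab: "b>0" "a>b" and u: "x1^2+y1^2=1" "x2^2+y2^2=1" "x3^2+y3^2=1"
    and d: "(x1,y1)\<noteq>(x2,y2)" "(x1,y1)\<noteq>(x3,y3)" "(x2,y2)\<noteq>(x3,y3)"
    and R1: "gn x1 y1 x2 y2 * sd a b x1 y1 x3 y3 = gn x1 y1 x3 y3 * sd a b x1 y1 x2 y2"
    and R2: "gn x2 y2 x3 y3 * sd a b x2 y2 x1 y1 = gn x2 y2 x1 y1 * sd a b x2 y2 x3 y3"
  shows "pp a b*x1*x2 + qq a b*y1*y2 = -(pp a b*qq a b/2)"
    "pp a b*x1*x3 + qq a b*y1*y3 = -(pp a b*qq a b/2)"
    "pp a b*x2*x3 + qq a b*y2*y3 = -(pp a b*qq a b/2)"
proof -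
  have a0: "a > 0" using ab by simp
  have e: "a^2-b^2 > 0" using ab by (simp add: power_strict_mono)
  define c where "c = gn x1 y1 x2 y2 / sd a b x1 y1 x2 y2"
  have s12: "sd a b x1 y1 x2 y2 > 0" using sd_pos[OF a0 ab(1) d(1)] .
  have g12: "gn x1 y1 x2 y2 > 0" using gn_pos[OF u(1,2) d(1)] .
  have cpos: "c > 0" unfolding c_def using s12 g12 by simp
  have e12: "gn x1 y1 x2 y2 = c * sd a b x1 y1 x2 y2" unfolding c_def using s12 by simp
  have e13: "gn x1 y1 x3 y3 = c * sd a b x1 y1 x3 y3"
    unfolding c_def using s12 R1 by (simp add: field_simps)
  have R2': "gn x2 y2 x3 y3 * sd a b x1 y1 x2 y2 = gn x1 y1 x2 y2 * sd a b x2 y2 x3 y3"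
    using R2 by (metis sd_sym gn_sym)
  have e23: "gn x2 y2 x3 y3 = c * sd a b x2 y2 x3 y3"
    unfolding c_def using s12 R2' by (simp add: field_simps)
  define t where "t = c^2"
  have tpos: "t > 0" unfolding t_def using cpos by simp
  define p' where "p' = 1 - t*(a^2-b^2)"
  define q' where "q' = 1 + t*(a^2-b^2)"
  define r' where "r' = 1 - t*(a^2+b^2)"
  have r12: "p'*x1*x2 + q'*y1*y2 = r'"
    using pair_fwd[OF u(1,2) d(1) ab e12] unfolding p'_def q'_def r'_def t_def .
  have r13: "p'*x1*x3 + q'*y1*y3 = r'"
    using pair_fwd[OF u(1,3) d(2) ab e13] unfolding p'_def q'_def r'_def t_def .
  have r23: "p'*x2*x3 + q'*y2*y3 = r'"
    using pair_fwd[OF u(2,3) d(3) ab e23] unfolding p'_def q'_def r'_def t_def .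
  have pq2: "p'+q' = 2" unfolding p'_def q'_def by simp
  have cay: "(2*r'+p'*q') * (p'*x1^2+q'*y1^2 - r') * (p'^2*x1^2+q'^2*y1^2) * ((x2-x3)^2+(y2-y3)^2) = 0"
    using cayley[OF u pq2 r12 r13 r23] .
  have f1: "p'*x1^2+q'*y1^2 - r' \<noteq> 0"
  proof -
    have "p'*x1^2+q'*y1^2 - r' = t*(2*a^2*y1^2+2*b^2*x1^2)"
      unfolding p'_def q'_def r'_def using u(1) by algebra
    moreover have "2*a^2*y1^2+2*b^2*x1^2 > 0"
    proof -
      have "x1 \<noteq> 0 \<or> y1 \<noteq> 0" using u(1) by auto
      then show ?thesis
      proof
        assume "x1 \<noteq> 0" then have "2*b^2*x1^2 > 0" using ab(1) by simp
        moreover have "2*a^2*y1^2 \<ge> 0" by simp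
        ultimately show ?thesis by linarith
      next
        assume "y1 \<noteq> 0" then have "2*a^2*y1^2 > 0" using a0 by simp
        moreover have "2*b^2*x1^2 \<ge> 0" by simp
        ultimately show ?thesis by linarith
      qed
    qed
    ultimately show ?thesis using tpos by simp
  qed
  have f2: "p'^2*x1^2+q'^2*y1^2 \<noteq> 0"
  proof
    assume "p'^2*x1^2+q'^2*y1^2 = 0"
    then have "(p'*x1)^2 + (q'*y1)^2 = 0" by (simp add: power_mult_distrib)
    then have z: "p'*x1 = 0" "q'*y1 = 0" by (simp_all add: sum_power2_eq_zero_iff)
    have "t*(a^2-b^2) > 0" using tpos e by simp
    then have qp: "q' > 0" unfolding q'_def by linarith
    then have y1: "y1 = 0" using z by simp
    then have "x1 \<noteq> 0" using u(1) by auto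
    then have p0: "p' = 0" using z by simp
    have "r' = 0" using r12 z by (metis mult.assoc mult_zero_left add_0)
    then have "t*(a^2+b^2) = t*(a^2-b^2)" using p0 unfolding p'_def r'_def by simp
    then have "a^2+b^2 = a^2-b^2" using tpos by simp
    then show False using ab by simp
  qed
  have f3: "(x2-x3)^2+(y2-y3)^2 \<noteq> 0" using d(3) by (auto simp: sum_power2_eq_zero_iff)
  have C: "2*r'+p'*q' = 0" using cay f1 f2 f3 mult_eq_0_iff by metis
  have quad: "(a^2-b^2)^2*t^2 + 2*(a^2+b^2)*t - 3 = 0"
    using C unfolding p'_def q'_def r'_def by algebra
  have "((a^2-b^2)^2*t + (a^2+b^2))^2 = (2*dl a b)^2"
    using quad dl_facts(1)[OF ab] by algebra
  moreover have "(a^2-b^2)^2*t + (a^2+b^2) \<ge> 0" using tpos by simp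
  moreover have "2*dl a b \<ge> 0" using dl_facts(3)[OF ab] zero_le_power2[of b] by linarith
  ultimately have tv: "(a^2-b^2)^2*t + (a^2+b^2) = 2*dl a b" using power2_eq_iff_nonneg by blast
  have pv: "p' = pp a b"
  proof -
    have "(a^2-b^2)*p' = 2*(a^2 - dl a b)" unfolding p'_def using tv by algebra
    then show ?thesis unfolding pp_def using e by (simp add: field_simps)
  qed
  have qv: "q' = qq a b"
  proof -
    have "(a^2-b^2)*q' = 2*(dl a b - b^2)" unfolding q'_def using tv by algebra
    then show ?thesis unfolding qq_def using e by (simp add: field_simps)
  qed
  have rv: "r' = -(pp a b*qq a b/2)" using C pv qv by simp
  show "pp a b*x1*x2 + qq a b*y1*y2 = -(pp a b*qq a b/2)" using r12 pv qv rv by simp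
  show "pp a b*x1*x3 + qq a b*y1*y3 = -(pp a b*qq a b/2)" using r13 pv qv rv by simp
  show "pp a b*x2*x3 + qq a b*y2*y3 = -(pp a b*qq a b/2)" using r23 pv qv rv by simp
qed



lemma dist_n: "dist ((a*x1,b*y1)::pt) (a*x2,b*y2) = sd a b x1 y1 x2 y2"
  unfolding sd_def by (simp add: dist_norm norm_pt)

lemma ell_rep:
  assumes "a \<noteq> 0" "b \<noteq> 0" "on_ellipse a b P"
  shows "P = (a*(fst P/a), b*(snd P/b))" "(fst P/a)^2 + (snd P/b)^2 = 1"
  using assms by (auto simp: on_ellipse_def power_divide prod_eq_iff)

lemma on_ell_n: "a \<noteq> 0 \<Longrightarrow> b \<noteq> 0 \<Longrightarrow> on_ellipse a b (a*x, b*y) \<longleftrightarrow> x^2+y^2 = 1"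
  by (simp add: on_ellipse_def power_mult_distrib)

lemma nondeg_n:
  assumes "a \<noteq> 0" "b \<noteq> 0"
  shows "non_degenerate (a*x1,b*y1) (a*x2,b*y2) (a*x3,b*y3) \<longleftrightarrow> (x2-x1)*(y3-y1) - (y2-y1)*(x3-x1) \<noteq> 0"
proof -
  have "cross2 ((a*x2,b*y2) - (a*x1,b*y1)) ((a*x3,b*y3) - (a*x1,b*y1)) = a*b*((x2-x1)*(y3-y1) - (y2-y1)*(x3-x1))"
    by (simp add: cross2_def algebra_simps)
  then show ?thesis using assms by (simp add: non_degenerate_def)
qed

lemma pq_aux: fixes p q x y :: real
  assumes "p+q=2" "x^2+y^2=1" shows "2*(p*x^2+q*y^2) - p*q = p^2*x^2 + q^2*y^2"
proof -
  have "2*(p*x^2+q*y^2) - p*q - (p^2*x^2 + q^2*y^2) = (2 - p - q)*(p*x^2 + q*y^2) + p*q*(x^2+y^2-1)"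
    by (simp add: algebra_simps power2_eq_square)
  also have "\<dots> = 0" using assms by simp
  finally show ?thesis by simp
qed

lemma unit_cross_nz:
  fixes x2 y2 x3 y3 :: real
  assumes "b>0" "a>b" "x2^2+y2^2=1" "x3^2+y3^2=1"
    "pp a b*x2*x3 + qq a b*y2*y3 = -(pp a b*qq a b/2)"
  shows "x2*y3 - y2*x3 \<noteq> 0"
proof
  assume cr: "x2*y3 - y2*x3 = 0"
  note f = pq_facts[OF assms(1,2)]
  define l where "l = x2*x3+y2*y3"
  have "l^2 + (x2*y3 - y2*x3)^2 = 1" unfolding l_def using assms(3,4) by algebra
  then have l2: "l^2 = 1" using cr by simp
  have x3: "x3 = l*x2" unfolding l_def using assms(3) cr by algebra
  have y3: "y3 = l*y2" unfolding l_def using assms(3) cr by algebra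
  have lv: "l*(pp a b*x2^2 + qq a b*y2^2) = -(pp a b*qq a b/2)"
    using assms(5) unfolding x3 y3 by (simp add: algebra_simps power2_eq_square)
  have "(l*(pp a b*x2^2 + qq a b*y2^2))^2 = (pp a b*qq a b/2)^2"
    unfolding lv by simp
  then have sq: "(pp a b*x2^2 + qq a b*y2^2)^2 = (pp a b*qq a b/2)^2"
    using l2 by (simp add: power_mult_distrib)
  define X where "X = pp a b*x2^2 + qq a b*y2^2"
  define H where "H = pp a b*qq a b/2"
  have id: "2*X - 2*H = (pp a b)^2*x2^2 + (qq a b)^2*y2^2"
    using pq_aux[OF f(3) assms(3)] unfolding X_def H_def by simp
  have sq': "X^2 = H^2" using sq unfolding X_def H_def .
  have pos: "(pp a b)^2*x2^2 + (qq a b)^2*y2^2 > 0"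
  proof -
    have "x2 \<noteq> 0 \<or> y2 \<noteq> 0" using assms(3) by auto
    then show ?thesis
    proof
      assume "x2 \<noteq> 0" then have "(pp a b)^2*x2^2 > 0" using f(1) by simp
      moreover have "(qq a b)^2*y2^2 \<ge> 0" by simp
      ultimately show ?thesis by linarith
    next
      assume "y2 \<noteq> 0" then have "(qq a b)^2*y2^2 > 0" using f(2) by simp
      moreover have "(pp a b)^2*x2^2 \<ge> 0" by simp
      ultimately show ?thesis by linarith
    qed
  qed
  have h0: "H > 0" unfolding H_def using f(1,2) by simp
  have A: "X > H" using id pos by linarith
  then have "X \<ge> 0" using h0 by linarith
  then have "X = H" using sq' h0 power2_eq_iff_nonneg[of X H] by simp
  then show False using A by simp
qed

lemma circ_noncol:
  fixes x1 y1 x2 y2 x3 y3 :: real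
  assumes "x1^2+y1^2=1" "x2^2+y2^2=1" "x3^2+y3^2=1"
    "(x1,y1)\<noteq>(x2,y2)" "(x1,y1)\<noteq>(x3,y3)" "(x2,y2)\<noteq>(x3,y3)"
  shows "(x2-x1)*(y3-y1) - (y2-y1)*(x3-x1) \<noteq> 0"
proof
  assume "(x2-x1)*(y3-y1) - (y2-y1)*(x3-x1) = 0"
  then have "((x1-x2)^2+(y1-y2)^2)*((x2-x3)^2+(y2-y3)^2)*((x3-x1)^2+(y3-y1)^2) = 0"
    using circ_id[OF assms(1-3)] by simp
  moreover have "(x1-x2)^2+(y1-y2)^2 \<noteq> 0" using assms(4) by (auto simp: sum_power2_eq_zero_iff)
  moreover have "(x2-x3)^2+(y2-y3)^2 \<noteq> 0" using assms(6) by (auto simp: sum_power2_eq_zero_iff)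
  moreover have "(x3-x1)^2+(y3-y1)^2 \<noteq> 0" using assms(5) by (auto simp: sum_power2_eq_zero_iff)
  ultimately show False by (metis mult_eq_0_iff)
qed

lemma tp_iff:
  fixes x1 y1 x2 y2 x3 y3 :: real
  assumes ab: "b>0" "a>b" and u: "x1^2+y1^2=1" "x2^2+y2^2=1" "x3^2+y3^2=1"
  shows "three_periodic a b (a*x1,b*y1) (a*x2,b*y2) (a*x3,b*y3) \<longleftrightarrow>
    ((x2-x1)*(y3-y1) - (y2-y1)*(x3-x1) \<noteq> 0 \<and>
     pp a b*x1*x2 + qq a b*y1*y2 = -(pp a b*qq a b/2) \<and>
     pp a b*x1*x3 + qq a b*y1*y3 = -(pp a b*qq a b/2) \<and>
     pp a b*x2*x3 + qq a b*y2*y3 = -(pp a b*qq a b/2))"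
proof (cases "(x2-x1)*(y3-y1) - (y2-y1)*(x3-x1) = 0")
  case True
  then show ?thesis using ab unfolding three_periodic_def by (simp add: nondeg_n)
next
  case False
  note cr = False
  have a0: "a > 0" using ab by simp
  have cr2: "(x3-x2)*(y1-y2) - (y3-y2)*(x1-x2) \<noteq> 0"
  proof -
    have "(x3-x2)*(y1-y2) - (y3-y2)*(x1-x2) = (x2-x1)*(y3-y1) - (y2-y1)*(x3-x1)" by algebra
    then show ?thesis using cr by simp
  qed
  have cr3: "(x1-x3)*(y2-y3) - (y1-y3)*(x2-x3) \<noteq> 0"
  proof -
    have "(x1-x3)*(y2-y3) - (y1-y3)*(x2-x3) = (x2-x1)*(y3-y1) - (y2-y1)*(x3-x1)" by algebra
    then show ?thesis using cr by simp
  qed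
  have d: "(x1,y1)\<noteq>(x2,y2)" "(x1,y1)\<noteq>(x3,y3)" "(x2,y2)\<noteq>(x3,y3)"
    using ncross_distinct[OF cr] by auto
  note B1 = bis_norm[OF a0 ab(1) u(1) cr]
  note B2 = bis_norm[OF a0 ab(1) u(2) cr2]
  note B3 = bis_norm[OF a0 ab(1) u(3) cr3]
  have tp: "three_periodic a b (a*x1,b*y1) (a*x2,b*y2) (a*x3,b*y3) \<longleftrightarrow>
     (gn x1 y1 x2 y2 * sd a b x1 y1 x3 y3 = gn x1 y1 x3 y3 * sd a b x1 y1 x2 y2 \<and>
      gn x2 y2 x3 y3 * sd a b x2 y2 x1 y1 = gn x2 y2 x1 y1 * sd a b x2 y2 x3 y3 \<and>
      gn x3 y3 x1 y1 * sd a b x3 y3 x2 y2 = gn x3 y3 x2 y2 * sd a b x3 y3 x1 y1)"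
    unfolding three_periodic_def B1 B2 B3 using cr ab u by (simp add: nondeg_n on_ell_n)
  show ?thesis
  proof
    assume "three_periodic a b (a*x1,b*y1) (a*x2,b*y2) (a*x3,b*y3)"
    then have R: "gn x1 y1 x2 y2 * sd a b x1 y1 x3 y3 = gn x1 y1 x3 y3 * sd a b x1 y1 x2 y2"
      "gn x2 y2 x3 y3 * sd a b x2 y2 x1 y1 = gn x2 y2 x1 y1 * sd a b x2 y2 x3 y3" using tp by auto
    show "(x2-x1)*(y3-y1) - (y2-y1)*(x3-x1) \<noteq> 0 \<and>
     pp a b*x1*x2 + qq a b*y1*y2 = -(pp a b*qq a b/2) \<and>
     pp a b*x1*x3 + qq a b*y1*y3 = -(pp a b*qq a b/2) \<and>
     pp a b*x2*x3 + qq a b*y2*y3 = -(pp a b*qq a b/2)"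
      using cr fwd_core[OF ab u d R] by simp
  next
    assume H: "(x2-x1)*(y3-y1) - (y2-y1)*(x3-x1) \<noteq> 0 \<and>
     pp a b*x1*x2 + qq a b*y1*y2 = -(pp a b*qq a b/2) \<and>
     pp a b*x1*x3 + qq a b*y1*y3 = -(pp a b*qq a b/2) \<and>
     pp a b*x2*x3 + qq a b*y2*y3 = -(pp a b*qq a b/2)"
    define c where "c = sqrt (t0 a b)"
    have g12: "gn x1 y1 x2 y2 = c * sd a b x1 y1 x2 y2" unfolding c_def using pair_bwd[OF u(1,2) ab] H by simp
    have g13: "gn x1 y1 x3 y3 = c * sd a b x1 y1 x3 y3" unfolding c_def using pair_bwd[OF u(1,3) ab] H by simp
    have g23: "gn x2 y2 x3 y3 = c * sd a b x2 y2 x3 y3" unfolding c_def using pair_bwd[OF u(2,3) ab] H by simp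
    have s: "sd a b x2 y2 x1 y1 = sd a b x1 y1 x2 y2" "sd a b x3 y3 x1 y1 = sd a b x1 y1 x3 y3"
      "sd a b x3 y3 x2 y2 = sd a b x2 y2 x3 y3" by (simp_all add: sd_sym)
    have g: "gn x2 y2 x1 y1 = gn x1 y1 x2 y2" "gn x3 y3 x1 y1 = gn x1 y1 x3 y3"
      "gn x3 y3 x2 y2 = gn x2 y2 x3 y3" by (simp_all add: gn_sym)
    show "three_periodic a b (a*x1,b*y1) (a*x2,b*y2) (a*x3,b*y3)"
      unfolding tp s g g12 g13 g23 by simp
  qed
qed



lemma tri_n: "trilinear_point p q r (a*x1,b*y1) (a*x2,b*y2) (a*x3,b*y3) =
  ((p* sd a b x2 y2 x3 y3*(a*x1) + q* sd a b x3 y3 x1 y1*(a*x2) + r* sd a b x1 y1 x2 y2*(a*x3))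
     /(p* sd a b x2 y2 x3 y3 + q* sd a b x3 y3 x1 y1 + r* sd a b x1 y1 x2 y2),
   (p* sd a b x2 y2 x3 y3*(b*y1) + q* sd a b x3 y3 x1 y1*(b*y2) + r* sd a b x1 y1 x2 y2*(b*y3))
     /(p* sd a b x2 y2 x3 y3 + q* sd a b x3 y3 x1 y1 + r* sd a b x1 y1 x2 y2))"
  unfolding trilinear_point_def Let_def dist_n by simp

lemma tri_strict:
  fixes x1 y1 x2 y2 x3 y3 :: real
  assumes "a>0" "b>0" "(x2-x1)*(y3-y1) - (y2-y1)*(x3-x1) \<noteq> 0"
  shows "sd a b x2 y2 x3 y3 < sd a b x3 y3 x1 y1 + sd a b x1 y1 x2 y2"
proof -
  define X where "X = (a*x2,b*y2) - (a*x1,b*y1)"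
  define Y where "Y = (a*x1,b*y1) - (a*x3,b*y3)"
  have nX: "norm X = sd a b x1 y1 x2 y2" unfolding X_def sd_def by (simp add: norm_pt power2_commute)
  have nY: "norm Y = sd a b x3 y3 x1 y1" unfolding Y_def sd_def by (simp add: norm_pt power2_commute)
  have nXY: "norm (X+Y) = sd a b x2 y2 x3 y3" unfolding X_def Y_def sd_def by (simp add: norm_pt)
  have d: "(x1,y1)\<noteq>(x3,y3)" using ncross_distinct[OF assms(3)] by auto
  have Yp: "norm Y > 0" unfolding nY using sd_pos[OF assms(1,2)] d by (metis sd_sym)
  have "norm (X+Y) \<le> norm X + norm Y" by (rule norm_triangle_ineq)
  moreover have "norm (X+Y) \<noteq> norm X + norm Y"
  proof
    assume "norm (X+Y) = norm X + norm Y"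
    then have "norm X *\<^sub>R Y = norm Y *\<^sub>R X" using norm_triangle_eq by blast
    then have c1: "norm X * (a*x1 - a*x3) = norm Y * (a*x2-a*x1)"
      and c2: "norm X * (b*y1-b*y3) = norm Y*(b*y2-b*y1)" unfolding X_def Y_def
      by (simp_all add: prod_eq_iff)
    have c1': "norm X * (x1 - x3) = norm Y * (x2-x1)" using c1 assms(1)
      by (simp add: right_diff_distrib[symmetric] mult.left_commute)
    have c2': "norm X * (y1 - y3) = norm Y * (y2-y1)" using c2 assms(2)
      by (simp add: right_diff_distrib[symmetric] mult.left_commute)
    have "norm Y * ((x2-x1)*(y3-y1) - (y2-y1)*(x3-x1)) = 0"
    proof -
      have "norm Y * ((x2-x1)*(y3-y1) - (y2-y1)*(x3-x1)) = (norm Y * (x2-x1))*(y3-y1) - (norm Y*(y2-y1))*(x3-x1)"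
        by (simp add: algebra_simps)
      also have "\<dots> = (norm X * (x1 - x3))*(y3-y1) - (norm X * (y1 - y3))*(x3-x1)" unfolding c1' c2' ..
      also have "\<dots> = 0" by (simp add: algebra_simps)
      finally show ?thesis .
    qed
    then show False using Yp assms(3) by simp
  qed
  ultimately have "norm (X+Y) < norm X + norm Y" by simp
  then show ?thesis unfolding nX nY nXY by simp
qed

lemma lin_unique:
  fixes w1 w2 z1 z2 x2 y2 x3 y3 :: real
  assumes "x2*y3 - y2*x3 \<noteq> 0" "w1*x2+w2*y2 = 1" "w1*x3+w2*y3 = 1" "z1*x2+z2*y2 = 1" "z1*x3+z2*y3=1"
  shows "w1 = z1" "w2 = z2"
proof -
  have "(w1-z1)*(x2*y3 - y2*x3) = 0" using assms(2-5) by algebra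
  then show "w1 = z1" using assms(1) by simp
  have "(w2-z2)*(x2*y3 - y2*x3) = 0" using assms(2-5) by algebra
  then show "w2 = z2" using assms(1) by simp
qed

lemma exc1:
  fixes x1 y1 x2 y2 x3 y3 :: real
  assumes ab: "b>0" "a>b" and u: "x1^2+y1^2=1" "x2^2+y2^2=1" "x3^2+y3^2=1"
    and tp: "three_periodic a b (a*x1,b*y1) (a*x2,b*y2) (a*x3,b*y3)"
  shows "trilinear_point (-1) 1 1 (a*x1,b*y1) (a*x2,b*y2) (a*x3,b*y3) = (-2*a*x1/qq a b, -2*b*y1/pp a b)"
proof -
  have a0: "a>0" using ab by simp
  note f = pq_facts[OF ab]
  have H: "(x2-x1)*(y3-y1) - (y2-y1)*(x3-x1) \<noteq> 0"
     "pp a b*x1*x2 + qq a b*y1*y2 = -(pp a b*qq a b/2)"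
     "pp a b*x1*x3 + qq a b*y1*y3 = -(pp a b*qq a b/2)"
     "pp a b*x2*x3 + qq a b*y2*y3 = -(pp a b*qq a b/2)" using tp tp_iff[OF ab u] by auto
  define S1 where "S1 = sd a b x2 y2 x3 y3"
  define S2 where "S2 = sd a b x3 y3 x1 y1"
  define S3 where "S3 = sd a b x1 y1 x2 y2"
  define c where "c = sqrt (t0 a b)"
  have g12: "gn x1 y1 x2 y2 = c*S3" unfolding c_def S3_def using pair_bwd[OF u(1,2) ab H(2)] .
  have g13: "gn x1 y1 x3 y3 = c*S2" unfolding c_def S2_def using pair_bwd[OF u(1,3) ab H(3)] by (simp add: sd_sym)
  have g23: "gn x2 y2 x3 y3 = c*S1" unfolding c_def S1_def using pair_bwd[OF u(2,3) ab H(4)] .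
  define D where "D = -S1+S2+S3"
  have Dp: "D > 0" unfolding D_def S1_def S2_def S3_def using tri_strict[OF a0 ab(1) H(1)] by simp
  define w1 where "w1 = (-S1*x1 + S2*x2 + S3*x3)/D"
  define w2 where "w2 = (-S1*y1 + S2*y2 + S3*y3)/D"
  have n2: "(-S1*x1 + S2*x2 + S3*x3)*x2 + (-S1*y1 + S2*y2 + S3*y3)*y2 = D"
    using g12 g23 u(2) unfolding gn_def D_def by algebra
  have n3: "(-S1*x1 + S2*x2 + S3*x3)*x3 + (-S1*y1 + S2*y2 + S3*y3)*y3 = D"
    using g13 g23 u(3) unfolding gn_def D_def by algebra
  have "w1*x2+w2*y2 = ((-S1*x1 + S2*x2 + S3*x3)*x2 + (-S1*y1 + S2*y2 + S3*y3)*y2)/D"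
    unfolding w1_def w2_def using Dp by (simp add: field_simps)
  then have w2v: "w1*x2+w2*y2 = 1" using n2 Dp by simp
  have "w1*x3+w2*y3 = ((-S1*x1 + S2*x2 + S3*x3)*x3 + (-S1*y1 + S2*y2 + S3*y3)*y3)/D"
    unfolding w1_def w2_def using Dp by (simp add: field_simps)
  then have w3v: "w1*x3+w2*y3 = 1" using n3 Dp by simp
  have z2: "(-2*x1/qq a b)*x2 + (-2*y1/pp a b)*y2 = 1"
    using H(2) f(1,2) by (simp add: field_simps)
  have z3: "(-2*x1/qq a b)*x3 + (-2*y1/pp a b)*y3 = 1"
    using H(3) f(1,2) by (simp add: field_simps)
  have cr23: "x2*y3 - y2*x3 \<noteq> 0" using unit_cross_nz[OF ab u(2,3) H(4)] .
  have wv: "w1 = -2*x1/qq a b" "w2 = -2*y1/pp a b" using lin_unique[OF cr23 w2v w3v z2 z3] by auto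
  have "trilinear_point (-1) 1 1 (a*x1,b*y1) (a*x2,b*y2) (a*x3,b*y3) = (a*w1, b*w2)"
    unfolding tri_n S1_def[symmetric] S2_def[symmetric] S3_def[symmetric] w1_def w2_def D_def
    by (simp add: field_simps)
  then show ?thesis unfolding wv by simp
qed



lemma nb_eq:
  fixes x1 y1 x2 y2 x3 y3 :: real
  assumes "a>0" "b>0" "(x1,y1) \<noteq> (x2,y2)" "(x1,y1) \<noteq> (x3,y3)"
  shows "normal_bisects a b (a*x1,b*y1) (a*x2,b*y2) (a*x3,b*y3) \<longleftrightarrow>
    a^2*y1*(sd a b x1 y1 x3 y3*(x2-x1) + sd a b x1 y1 x2 y2*(x3-x1))
      - b^2*x1*(sd a b x1 y1 x3 y3*(y2-y1) + sd a b x1 y1 x2 y2*(y3-y1)) = 0"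
proof -
  define L1 where "L1 = sd a b x1 y1 x2 y2"
  define L2 where "L2 = sd a b x1 y1 x3 y3"
  have L1p: "L1 > 0" unfolding L1_def using sd_pos[OF assms(1,2,3)] .
  have L2p: "L2 > 0" unfolding L2_def using sd_pos[OF assms(1,2,4)] .
  have n1: "norm ((a*x2,b*y2) - (a*x1,b*y1)) = L1" unfolding L1_def sd_def by (simp add: norm_pt power2_commute)
  have n2: "norm ((a*x3,b*y3) - (a*x1,b*y1)) = L2" unfolding L2_def sd_def by (simp add: norm_pt power2_commute)
  have "normal_bisects a b (a*x1,b*y1) (a*x2,b*y2) (a*x3,b*y3) \<longleftrightarrow>
     ((a*x2-a*x1)/L1 + (a*x3-a*x1)/L2)*(b*y1/b^2) - ((b*y2-b*y1)/L1 + (b*y3-b*y1)/L2)*(a*x1/a^2) = 0"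
    unfolding normal_bisects_def n1 n2 cross2_def ell_normal_def
    by (simp add: divide_inverse mult.commute)
  also have "((a*x2-a*x1)/L1 + (a*x3-a*x1)/L2)*(b*y1/b^2) - ((b*y2-b*y1)/L1 + (b*y3-b*y1)/L2)*(a*x1/a^2)
     = (a^2*y1*(L2*(x2-x1) + L1*(x3-x1)) - b^2*x1*(L2*(y2-y1) + L1*(y3-y1)))/(a*b*L1*L2)"
    using L1p L2p assms(1,2) by (simp add: field_simps power2_eq_square)
  finally show ?thesis unfolding L1_def L2_def using L1p L2p assms(1,2)
    unfolding L1_def L2_def by simp
qed

lemma inc_normal:
  fixes s T2 T3 :: real
  assumes "T2 > 0" "T3 > 0" "s \<ge> 0"
    "a^2*y1*(T2*(x2-x1) + T3*(x3-x1)) - b^2*x1*(T2*(y2-y1) + T3*(y3-y1)) = 0"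
  shows "a*((s*(a*x1) + T2*(a*x2) + T3*(a*x3))/(s+T2+T3))*y1
        - b*((s*(b*y1) + T2*(b*y2) + T3*(b*y3))/(s+T2+T3))*x1 = (a^2-b^2)*x1*y1"
proof -
  have pos: "s+T2+T3 > 0" using assms by simp
  have num: "a*(s*(a*x1) + T2*(a*x2) + T3*(a*x3))*y1 - b*(s*(b*y1) + T2*(b*y2) + T3*(b*y3))*x1
      = (a^2-b^2)*x1*y1*(s+T2+T3)" using assms(4) by algebra
  define N1 where "N1 = s*(a*x1) + T2*(a*x2) + T3*(a*x3)"
  define N2 where "N2 = s*(b*y1) + T2*(b*y2) + T3*(b*y3)"
  define S where "S = s+T2+T3"
  have "a*(N1/S)*y1 - b*(N2/S)*x1 = a*N1*y1/S - b*N2*x1/S" by simp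
  also have "\<dots> = (a*N1*y1 - b*N2*x1)/S" by (simp add: diff_divide_distrib)
  also have "\<dots> = (a^2-b^2)*x1*y1" using num pos unfolding N1_def N2_def S_def by simp
  finally show ?thesis unfolding N1_def N2_def S_def .
qed

lemma inc_formula:
  fixes x1 y1 x2 y2 x3 y3 :: real
  assumes ab: "b>0" "a>b" and u: "x1^2+y1^2=1" "x2^2+y2^2=1" "x3^2+y3^2=1"
    and tp: "three_periodic a b (a*x1,b*y1) (a*x2,b*y2) (a*x3,b*y3)"
  shows "incenter (a*x1,b*y1) (a*x2,b*y2) (a*x3,b*y3) =
     ((a^2-b^2)*x1*x2*(y2-y1)/(a*(x1*y2-y1*x2)), (a^2-b^2)*y1*y2*(x2-x1)/(b*(x1*y2-y1*x2)))"
proof -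
  have a0: "a>0" using ab by simp
  have H: "(x2-x1)*(y3-y1) - (y2-y1)*(x3-x1) \<noteq> 0"
     "pp a b*x1*x2 + qq a b*y1*y2 = -(pp a b*qq a b/2)" using tp tp_iff[OF ab u] by auto
  have d: "(x1,y1)\<noteq>(x2,y2)" "(x1,y1)\<noteq>(x3,y3)" "(x2,y2)\<noteq>(x3,y3)"
    using ncross_distinct[OF H(1)] by auto
  have nb1: "normal_bisects a b (a*x1,b*y1) (a*x2,b*y2) (a*x3,b*y3)"
   and nb2: "normal_bisects a b (a*x2,b*y2) (a*x3,b*y3) (a*x1,b*y1)"
    using tp unfolding three_periodic_def by auto
  define S1 where "S1 = sd a b x2 y2 x3 y3"
  define S2 where "S2 = sd a b x3 y3 x1 y1"
  define S3 where "S3 = sd a b x1 y1 x2 y2"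
  have S1p: "S1 > 0" unfolding S1_def using sd_pos[OF a0 ab(1) d(3)] .
  have S2p: "S2 > 0" unfolding S2_def using sd_pos[OF a0 ab(1) d(2)] by (simp add: sd_sym)
  have S3p: "S3 > 0" unfolding S3_def using sd_pos[OF a0 ab(1) d(1)] .
  have E1: "a^2*y1*(S2*(x2-x1) + S3*(x3-x1)) - b^2*x1*(S2*(y2-y1) + S3*(y3-y1)) = 0"
    using nb1 nb_eq[OF a0 ab(1) d(1,2)] unfolding S2_def S3_def by (simp add: sd_sym)
  have d': "(x2,y2)\<noteq>(x3,y3)" "(x2,y2)\<noteq>(x1,y1)" using d by auto
  have E2: "a^2*y2*(S3*(x3-x2) + S1*(x1-x2)) - b^2*x2*(S3*(y3-y2) + S1*(y1-y2)) = 0"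
    using nb2 nb_eq[OF a0 ab(1) d'] unfolding S1_def S3_def by (simp add: sd_sym)
  define Zx where "Zx = (S1*(a*x1) + S2*(a*x2) + S3*(a*x3))/(S1+S2+S3)"
  define Zy where "Zy = (S1*(b*y1) + S2*(b*y2) + S3*(b*y3))/(S1+S2+S3)"
  have inc: "incenter (a*x1,b*y1) (a*x2,b*y2) (a*x3,b*y3) = (Zx, Zy)"
    unfolding incenter_def tri_n Zx_def Zy_def S1_def S2_def S3_def by simp
  have Q1: "a*Zx*y1 - b*Zy*x1 = (a^2-b^2)*x1*y1"
    using inc_normal[OF S2p S3p _ E1, of S1] S1p unfolding Zx_def Zy_def by simp
  have Q2': "a*((S2*(a*x2) + S3*(a*x3) + S1*(a*x1))/(S2+S3+S1))*y2
        - b*((S2*(b*y2) + S3*(b*y3) + S1*(b*y1))/(S2+S3+S1))*x2 = (a^2-b^2)*x2*y2"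
    using inc_normal[OF S3p S1p _ E2, of S2] S2p by simp
  have Q2: "a*Zx*y2 - b*Zy*x2 = (a^2-b^2)*x2*y2"
  proof -
    have "(S2*(a*x2) + S3*(a*x3) + S1*(a*x1))/(S2+S3+S1) = Zx" unfolding Zx_def by (simp add: add_ac)
    moreover have "(S2*(b*y2) + S3*(b*y3) + S1*(b*y1))/(S2+S3+S1) = Zy" unfolding Zy_def by (simp add: add_ac)
    ultimately show ?thesis using Q2' by simp
  qed
  have D0: "x1*y2-y1*x2 \<noteq> 0" using unit_cross_nz[OF ab u(1,2) H(2)] by (simp add: mult.commute)
  have A: "(a*Zx)*(x1*y2-y1*x2) = (a^2-b^2)*x1*x2*(y2-y1)" using Q1 Q2 by algebra
  have B: "(b*Zy)*(x1*y2-y1*x2) = (a^2-b^2)*y1*y2*(x2-x1)" using Q1 Q2 by algebra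
  have "Zx = (a^2-b^2)*x1*x2*(y2-y1)/(a*(x1*y2-y1*x2))" using A D0 a0 by (simp add: field_simps)
  moreover have "Zy = (a^2-b^2)*y1*y2*(x2-x1)/(b*(x1*y2-y1*x2))" using B D0 ab(1) by (simp add: field_simps)
  ultimately show ?thesis unfolding inc by simp
qed



definition rr :: "real \<Rightarrow> real \<Rightarrow> real" where "rr a b = -(pp a b * qq a b / 2)"
definition NN :: "real \<Rightarrow> real \<Rightarrow> real \<Rightarrow> real \<Rightarrow> real" where
  "NN a b x y = (pp a b * x)^2 + (qq a b * y)^2"
definition hh :: "real \<Rightarrow> real \<Rightarrow> real \<Rightarrow> real \<Rightarrow> real" where
  "hh a b x y = sqrt (NN a b x y - (rr a b)^2)"
definition X2f :: "real \<Rightarrow> real \<Rightarrow> real \<Rightarrow> real \<Rightarrow> real" where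
  "X2f a b x y = (rr a b * (pp a b * x) - hh a b x y * (qq a b * y)) / NN a b x y"
definition Y2f :: "real \<Rightarrow> real \<Rightarrow> real \<Rightarrow> real \<Rightarrow> real" where
  "Y2f a b x y = (rr a b * (qq a b * y) + hh a b x y * (pp a b * x)) / NN a b x y"
definition X3f :: "real \<Rightarrow> real \<Rightarrow> real \<Rightarrow> real \<Rightarrow> real" where
  "X3f a b x y = (rr a b * (pp a b * x) + hh a b x y * (qq a b * y)) / NN a b x y"
definition Y3f :: "real \<Rightarrow> real \<Rightarrow> real \<Rightarrow> real \<Rightarrow> real" where
  "Y3f a b x y = (rr a b * (qq a b * y) - hh a b x y * (pp a b * x)) / NN a b x y"

lemma NN_gt:
  fixes x y :: real
  assumes ab: "b>0" "a>b" and u: "x^2+y^2=1"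
  shows "NN a b x y - (rr a b)^2 > 0" "NN a b x y > 0"
proof -
  note f = pq_facts[OF ab]
  define p where "p = pp a b"
  define q where "q = qq a b"
  have p0: "p > 0" "q > 0" "p + q = 2" unfolding p_def q_def using f by auto
  have "4*(NN a b x y - (rr a b)^2) = p^2*x^2*(4 - q^2) + q^2*y^2*(4-p^2)"
  proof -
    have "4*(NN a b x y - (rr a b)^2) = 4*((p*x)^2 + (q*y)^2) - (p*q)^2"
      unfolding NN_def rr_def p_def q_def by (simp add: power2_eq_square)
    also have "\<dots> = p^2*x^2*(4 - q^2) + q^2*y^2*(4-p^2) + p^2*q^2*(x^2+y^2-1)"
      by (simp add: algebra_simps power2_eq_square)
    finally show ?thesis using u by simp
  qed
  moreover have "4 - q^2 > 0"
  proof -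
    have "q < 2" using p0 by linarith
    then have "q^2 < 2^2" using p0 by (intro power_strict_mono) auto
    then show ?thesis by simp
  qed
  moreover have "4 - p^2 > 0"
  proof -
    have "p < 2" using p0 by linarith
    then have "p^2 < 2^2" using p0 by (intro power_strict_mono) auto
    then show ?thesis by simp
  qed
  moreover have "x \<noteq> 0 \<or> y \<noteq> 0" using u by auto
  ultimately have "4*(NN a b x y - (rr a b)^2) > 0"
  proof -
    assume e: "4*(NN a b x y - (rr a b)^2) = p^2*x^2*(4 - q^2) + q^2*y^2*(4-p^2)"
      and q4: "4 - q^2 > 0" and p4: "4 - p^2 > 0" and xy: "x \<noteq> 0 \<or> y \<noteq> 0"
    have t1: "p^2*x^2*(4 - q^2) \<ge> 0" using q4 by simp
    have t2: "q^2*y^2*(4 - p^2) \<ge> 0" using p4 by simp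
    from xy show ?thesis
    proof
      assume "x \<noteq> 0" then have "p^2*x^2*(4 - q^2) > 0" using q4 p0 by simp
      then show ?thesis using e t2 by linarith
    next
      assume "y \<noteq> 0" then have "q^2*y^2*(4 - p^2) > 0" using p4 p0 by simp
      then show ?thesis using e t1 by linarith
    qed
  qed
  then show g: "NN a b x y - (rr a b)^2 > 0" by simp
  then show "NN a b x y > 0" using zero_le_power2[of "rr a b"] by linarith
qed

lemma div2_aux: fixes N p q A B C E :: real
  assumes "N \<noteq> 0"
  shows "p*(A/N)*(B/N) + q*(C/N)*(E/N) = (p*A*B + q*C*E)/N^2"
  using assms by (simp add: field_simps power2_eq_square)

lemma div1_aux: fixes N p q x y A C :: real
  assumes "N \<noteq> 0"
  shows "p*x*(A/N) + q*y*(C/N) = (p*x*A + q*y*C)/N"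
  using assms by (simp add: field_simps)

lemma sq_aux: fixes N A C :: real
  assumes "N \<noteq> 0"
  shows "(A/N)^2 + (C/N)^2 = (A^2+C^2)/N^2"
  using assms by (simp add: field_simps power2_eq_square)

lemma cons:
  fixes x y :: real
  assumes ab: "b>0" "a>b" and u: "x^2+y^2=1"
  shows "(X2f a b x y)^2 + (Y2f a b x y)^2 = 1" "(X3f a b x y)^2 + (Y3f a b x y)^2 = 1"
    "pp a b*x*X2f a b x y + qq a b*y*Y2f a b x y = -(pp a b*qq a b/2)"
    "pp a b*x*X3f a b x y + qq a b*y*Y3f a b x y = -(pp a b*qq a b/2)"
    "pp a b*X2f a b x y*X3f a b x y + qq a b*Y2f a b x y*Y3f a b x y = -(pp a b*qq a b/2)"
    "(X2f a b x y - x)*(Y3f a b x y - y) - (Y2f a b x y - y)*(X3f a b x y - x) \<noteq> 0"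
proof -
  note f = pq_facts[OF ab]
  note g = NN_gt[OF ab u]
  define p where "p = pp a b"
  define q where "q = qq a b"
  define r where "r = rr a b"
  define N where "N = NN a b x y"
  define h where "h = hh a b x y"
  have r: "r = -(p*q/2)" unfolding r_def rr_def p_def q_def ..
  have N: "N = (p*x)^2 + (q*y)^2" unfolding N_def NN_def p_def q_def ..
  have Np: "N > 0" "N \<noteq> 0" using g unfolding N_def by auto
  have h2: "h^2 = N - r^2" unfolding h_def hh_def N_def r_def using g by simp
  have hp: "h > 0" unfolding h_def hh_def using g by simp
  have X2: "X2f a b x y = (r*(p*x) - h*(q*y))/N" unfolding X2f_def r_def p_def q_def h_def N_def ..
  have Y2: "Y2f a b x y = (r*(q*y) + h*(p*x))/N" unfolding Y2f_def r_def p_def q_def h_def N_def ..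
  have X3: "X3f a b x y = (r*(p*x) + h*(q*y))/N" unfolding X3f_def r_def p_def q_def h_def N_def ..
  have Y3: "Y3f a b x y = (r*(q*y) - h*(p*x))/N" unfolding Y3f_def r_def p_def q_def h_def N_def ..
  have pq2: "p+q = 2" unfolding p_def q_def using f(3) .
  show u2: "(X2f a b x y)^2 + (Y2f a b x y)^2 = 1"
  proof -
    have "(r*(p*x) - h*(q*y))^2 + (r*(q*y) + h*(p*x))^2 = (r^2+h^2)*N" unfolding N by algebra
    then show ?thesis unfolding X2 Y2 sq_aux[OF Np(2)] using h2 Np by (simp add: power2_eq_square)
  qed
  show u3: "(X3f a b x y)^2 + (Y3f a b x y)^2 = 1"
  proof -
    have "(r*(p*x) + h*(q*y))^2 + (r*(q*y) - h*(p*x))^2 = (r^2+h^2)*N" unfolding N by algebra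
    then show ?thesis unfolding X3 Y3 sq_aux[OF Np(2)] using h2 Np by (simp add: power2_eq_square)
  qed
  show n12: "pp a b*x*X2f a b x y + qq a b*y*Y2f a b x y = -(pp a b*qq a b/2)"
  proof -
    have "p*x*(r*(p*x) - h*(q*y)) + q*y*(r*(q*y) + h*(p*x)) = r*N" unfolding N by algebra
    then show ?thesis unfolding X2 Y2 p_def[symmetric] q_def[symmetric] div1_aux[OF Np(2)]
      using Np r by simp
  qed
  show n13: "pp a b*x*X3f a b x y + qq a b*y*Y3f a b x y = -(pp a b*qq a b/2)"
  proof -
    have "p*x*(r*(p*x) + h*(q*y)) + q*y*(r*(q*y) - h*(p*x)) = r*N" unfolding N by algebra
    then show ?thesis unfolding X3 Y3 p_def[symmetric] q_def[symmetric] div1_aux[OF Np(2)]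
      using Np r by simp
  qed
  show n23: "pp a b*X2f a b x y*X3f a b x y + qq a b*Y2f a b x y*Y3f a b x y = -(pp a b*qq a b/2)"
  proof -
    have ci: "p*(r^2*(p*x)^2 - h^2*(q*y)^2) + q*(r^2*(q*y)^2 - h^2*(p*x)^2) = r*N^2"
    proof -
      have h2': "h^2 = p^2*x^2+q^2*y^2 - r^2" using h2 unfolding N by (simp add: power_mult_distrib)
      have N': "N = p^2*x^2+q^2*y^2" unfolding N by (simp add: power_mult_distrib)
      show ?thesis using cons_id[OF u pq2 h2' r] unfolding N' .
    qed
    have "p*(r*(p*x) - h*(q*y))*(r*(p*x) + h*(q*y)) + q*(r*(q*y) + h*(p*x))*(r*(q*y) - h*(p*x)) = r*N^2"
      using ci by algebra
    then show ?thesis unfolding X2 Y2 X3 Y3 p_def[symmetric] q_def[symmetric] div2_aux[OF Np(2)]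
      using Np r by simp
  qed
  have d12: "(x,y) \<noteq> (X2f a b x y, Y2f a b x y)"
  proof
    assume "(x,y) = (X2f a b x y, Y2f a b x y)"
    then have "pp a b*x*x + qq a b*y*y = -(pp a b*qq a b/2)" using n12 by simp
    moreover have "pp a b*x*x + qq a b*y*y \<ge> 0"
    proof -
      have "pp a b*x*x = pp a b*x^2" "qq a b*y*y = qq a b*y^2" by (simp_all add: power2_eq_square mult.assoc)
      moreover have "pp a b*x^2 \<ge> 0" "qq a b*y^2 \<ge> 0" using f(1,2) by simp_all
      ultimately show ?thesis by linarith
    qed
    moreover have "pp a b*qq a b/2 > 0" using f(1,2) by simp
    ultimately show False by linarith
  qed
  have d13: "(x,y) \<noteq> (X3f a b x y, Y3f a b x y)"
  proof
    assume "(x,y) = (X3f a b x y, Y3f a b x y)"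
    then have "pp a b*x*x + qq a b*y*y = -(pp a b*qq a b/2)" using n13 by simp
    moreover have "pp a b*x*x + qq a b*y*y \<ge> 0"
    proof -
      have "pp a b*x*x = pp a b*x^2" "qq a b*y*y = qq a b*y^2" by (simp_all add: power2_eq_square mult.assoc)
      moreover have "pp a b*x^2 \<ge> 0" "qq a b*y^2 \<ge> 0" using f(1,2) by simp_all
      ultimately show ?thesis by linarith
    qed
    moreover have "pp a b*qq a b/2 > 0" using f(1,2) by simp
    ultimately show False by linarith
  qed
  have d23: "(X2f a b x y, Y2f a b x y) \<noteq> (X3f a b x y, Y3f a b x y)"
  proof
    assume "(X2f a b x y, Y2f a b x y) = (X3f a b x y, Y3f a b x y)"
    then have "r*(p*x) - h*(q*y) = r*(p*x) + h*(q*y)" "r*(q*y) + h*(p*x) = r*(q*y) - h*(p*x)"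
      unfolding X2 Y2 X3 Y3 using Np by (simp_all add: divide_cancel_right)
    then have "h*(q*y) = 0" "h*(p*x) = 0" by simp_all
    then have "q*y = 0" "p*x = 0" using hp by simp_all
    then have "N = 0" unfolding N by simp
    then show False using Np by simp
  qed
  show "(X2f a b x y - x)*(Y3f a b x y - y) - (Y2f a b x y - y)*(X3f a b x y - x) \<noteq> 0"
    using circ_noncol[OF u u2 u3 d12 d13 d23] .
qed

lemma cons_tp:
  fixes x y :: real
  assumes ab: "b>0" "a>b" and u: "x^2+y^2=1"
  shows "three_periodic a b (a*x,b*y) (a*X2f a b x y, b*Y2f a b x y) (a*X3f a b x y, b*Y3f a b x y)"
  using tp_iff[OF ab u cons(1,2)[OF ab u]] cons[OF ab u] by simp



lemma tp_rot: "three_periodic a b P1 P2 P3 \<Longrightarrow> three_periodic a b P2 P3 P1"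
proof -
  assume tp: "three_periodic a b P1 P2 P3"
  have "cross2 (P3 - P2) (P1 - P2) = cross2 (P2 - P1) (P3 - P1)"
    by (simp add: cross2_def algebra_simps)
  then show ?thesis using tp unfolding three_periodic_def non_degenerate_def by simp
qed

lemma tri_rot: "trilinear_point p q r P1 P2 P3 = trilinear_point q r p P2 P3 P1"
  unfolding trilinear_point_def Let_def by (simp add: add_ac)

lemma tp_norm:
  assumes "a \<noteq> 0" "b \<noteq> 0" "three_periodic a b P1 P2 P3"
  obtains x1 y1 x2 y2 x3 y3 where "P1 = (a*x1,b*y1)" "P2 = (a*x2,b*y2)" "P3 = (a*x3,b*y3)"
    "x1^2+y1^2=1" "x2^2+y2^2=1" "x3^2+y3^2=1"
proof -
  have e: "on_ellipse a b P1" "on_ellipse a b P2" "on_ellipse a b P3"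
    using assms(3) unfolding three_periodic_def by auto
  show ?thesis
    using that[OF ell_rep(1)[OF assms(1,2) e(1)] ell_rep(1)[OF assms(1,2) e(2)] ell_rep(1)[OF assms(1,2) e(3)]
      ell_rep(2)[OF assms(1,2) e(1)] ell_rep(2)[OF assms(1,2) e(2)] ell_rep(2)[OF assms(1,2) e(3)]] .
qed

lemma inc_on:
  fixes x1 y1 x2 y2 x3 y3 :: real
  assumes ab: "b>0" "a>b" and u: "x1^2+y1^2=1" "x2^2+y2^2=1" "x3^2+y3^2=1"
    and tp: "three_periodic a b (a*x1,b*y1) (a*x2,b*y2) (a*x3,b*y3)"
  shows "on_ellipse ((dl a b - b^2)/a) ((a^2 - dl a b)/b) (incenter (a*x1,b*y1) (a*x2,b*y2) (a*x3,b*y3))"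
proof -
  note f = pq_facts[OF ab]
  have H: "pp a b*x1*x2 + qq a b*y1*y2 = -(pp a b*qq a b/2)" using tp tp_iff[OF ab u] by auto
  have D0: "x1*y2-y1*x2 \<noteq> 0" using unit_cross_nz[OF ab u(1,2) H] by (simp add: mult.commute)
  define e where "e = a^2-b^2"
  have e0: "e > 0" unfolding e_def using ab by (simp add: power_strict_mono)
  define p where "p = pp a b"
  define q where "q = qq a b"
  define D where "D = x1*y2-y1*x2"
  have p0: "p > 0" "q > 0" "p+q = 2" unfolding p_def q_def using f by auto
  have A1: "(dl a b - b^2)/a = q*e/(2*a)" unfolding q_def e_def using f(10) .
  have B1: "(a^2 - dl a b)/b = p*e/(2*b)" unfolding p_def e_def using f(11) .
  have G: "4*p^2*x1^2*x2^2*(y2-y1)^2 + 4*q^2*y1^2*y2^2*(x2-x1)^2 = p^2*q^2*D^2"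
    unfolding D_def using Gid[OF u(1,2) p0(3)] H unfolding p_def q_def by simp
  have a0: "a \<noteq> 0" "b \<noteq> 0" using ab by auto
  have Dn: "D \<noteq> 0" using D0 unfolding D_def .
  have "(e*x1*x2*(y2-y1)/(a*D))^2/(q*e/(2*a))^2 + (e*y1*y2*(x2-x1)/(b*D))^2/(p*e/(2*b))^2
     = (4*p^2*x1^2*x2^2*(y2-y1)^2 + 4*q^2*y1^2*y2^2*(x2-x1)^2)/(p^2*q^2*D^2)"
    using a0 e0 p0 Dn by (simp add: field_simps power2_eq_square)
  also have "\<dots> = 1" unfolding G using p0 Dn by simp
  finally have "(e*x1*x2*(y2-y1)/(a*D))^2/(q*e/(2*a))^2 + (e*y1*y2*(x2-x1)/(b*D))^2/(p*e/(2*b))^2 = 1" .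
  then show ?thesis unfolding inc_formula[OF ab u tp] on_ellipse_def A1 B1 e_def D_def by simp
qed

lemma exc_on:
  fixes x1 y1 x2 y2 x3 y3 :: real
  assumes ab: "b>0" "a>b" and u: "x1^2+y1^2=1" "x2^2+y2^2=1" "x3^2+y3^2=1"
    and tp: "three_periodic a b (a*x1,b*y1) (a*x2,b*y2) (a*x3,b*y3)"
  shows "on_ellipse ((b^2 + dl a b)/a) ((a^2 + dl a b)/b) (trilinear_point (-1) 1 1 (a*x1,b*y1) (a*x2,b*y2) (a*x3,b*y3))"
proof -
  note f = pq_facts[OF ab]
  have a0: "a > 0" "b > 0" using ab by auto
  have Ae: "(b^2 + dl a b)/a = 2*a/qq a b" using f(8) f(2) by (simp add: field_simps)
  have Be: "(a^2 + dl a b)/b = 2*b/pp a b" using f(9) f(1) by (simp add: field_simps)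
  have "(-2*a*x1/qq a b)^2/(2*a/qq a b)^2 + (-2*b*y1/pp a b)^2/(2*b/pp a b)^2 = x1^2+y1^2"
    using a0 f(1,2) by (simp add: field_simps power2_eq_square)
  then show ?thesis unfolding exc1[OF ab u tp] on_ellipse_def Ae Be using u(1) by simp
qed

lemma exc_on_pt:
  assumes ab: "b>0" "a>b" and tp: "three_periodic a b P1 P2 P3"
  shows "on_ellipse ((b^2 + dl a b)/a) ((a^2 + dl a b)/b) (trilinear_point (-1) 1 1 P1 P2 P3)"
proof -
  have a0: "a \<noteq> 0" "b \<noteq> 0" using ab by auto
  obtain x1 y1 x2 y2 x3 y3 where P: "P1 = (a*x1,b*y1)" "P2 = (a*x2,b*y2)" "P3 = (a*x3,b*y3)"
    and u: "x1^2+y1^2=1" "x2^2+y2^2=1" "x3^2+y3^2=1" using tp_norm[OF a0 tp] by metis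
  show ?thesis using exc_on[OF ab u] tp unfolding P by simp
qed

lemma inc_on_pt:
  assumes ab: "b>0" "a>b" and tp: "three_periodic a b P1 P2 P3"
  shows "on_ellipse ((dl a b - b^2)/a) ((a^2 - dl a b)/b) (incenter P1 P2 P3)"
proof -
  have a0: "a \<noteq> 0" "b \<noteq> 0" using ab by auto
  obtain x1 y1 x2 y2 x3 y3 where P: "P1 = (a*x1,b*y1)" "P2 = (a*x2,b*y2)" "P3 = (a*x3,b*y3)"
    and u: "x1^2+y1^2=1" "x2^2+y2^2=1" "x3^2+y3^2=1" using tp_norm[OF a0 tp] by metis
  show ?thesis using inc_on[OF ab u] tp unfolding P by simp
qed

lemma exc_surj:
  assumes ab: "b>0" "a>b" and Z: "on_ellipse ((b^2 + dl a b)/a) ((a^2 + dl a b)/b) Z"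
  shows "\<exists>P1 P2 P3. three_periodic a b P1 P2 P3 \<and> Z \<in> excenters P1 P2 P3"
proof -
  note f = pq_facts[OF ab]
  have a0: "a > 0" "b > 0" using ab by auto
  obtain zx zy where Zp: "Z = (zx,zy)" by (cases Z)
  have Ae: "(b^2 + dl a b)/a = 2*a/qq a b" using f(8) f(2) by (simp add: field_simps)
  have Be: "(a^2 + dl a b)/b = 2*b/pp a b" using f(9) f(1) by (simp add: field_simps)
  define x where "x = -(qq a b*zx/(2*a))"
  define y where "y = -(pp a b*zy/(2*b))"
  have "x^2+y^2 = zx^2/(2*a/qq a b)^2 + zy^2/(2*b/pp a b)^2"
    unfolding x_def y_def using a0 f(1,2) by (simp add: field_simps power2_eq_square)
  then have u: "x^2+y^2 = 1" using Z unfolding on_ellipse_def Zp Ae Be by simp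
  have tp: "three_periodic a b (a*x,b*y) (a*X2f a b x y, b*Y2f a b x y) (a*X3f a b x y, b*Y3f a b x y)"
    using cons_tp[OF ab u] .
  have u23: "(X2f a b x y)^2 + (Y2f a b x y)^2 = 1" "(X3f a b x y)^2 + (Y3f a b x y)^2 = 1"
    using cons[OF ab u] by auto
  have "trilinear_point (-1) 1 1 (a*x,b*y) (a*X2f a b x y, b*Y2f a b x y) (a*X3f a b x y, b*Y3f a b x y)
      = (-2*a*x/qq a b, -2*b*y/pp a b)" using exc1[OF ab u u23 tp] .
  also have "\<dots> = Z" unfolding Zp x_def y_def using a0 f(1,2) by simp
  finally show ?thesis using tp unfolding excenters_def by blast
qed



definition Uf :: "real \<Rightarrow> real \<Rightarrow> real \<Rightarrow> real" where
  "Uf a b t = cos t * X2f a b (cos t) (sin t) * (Y2f a b (cos t) (sin t) - sin t)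
     / (cos t * Y2f a b (cos t) (sin t) - sin t * X2f a b (cos t) (sin t))"

lemma cont_Uf:
  assumes ab: "b>0" "a>b"
  shows "continuous_on S (Uf a b)"
proof -
  have u: "\<And>t::real. (cos t)^2 + (sin t)^2 = 1" by (rule sin_cos_squared_add2)
  have NNc: "continuous_on S (\<lambda>t. NN a b (cos t) (sin t))" unfolding NN_def by (intro continuous_intros)
  have NNnz: "\<And>t. NN a b (cos t) (sin t) \<noteq> 0" using NN_gt(2)[OF ab u] by (metis less_irrefl)
  have hc: "continuous_on S (\<lambda>t. hh a b (cos t) (sin t))" unfolding hh_def by (intro continuous_intros NNc)
  have X2c: "continuous_on S (\<lambda>t. X2f a b (cos t) (sin t))" unfolding X2f_def
    by (intro continuous_intros hc NNc) (use NNnz in auto)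
  have Y2c: "continuous_on S (\<lambda>t. Y2f a b (cos t) (sin t))" unfolding Y2f_def
    by (intro continuous_intros hc NNc) (use NNnz in auto)
  have Dnz: "\<And>t. cos t * Y2f a b (cos t) (sin t) - sin t * X2f a b (cos t) (sin t) \<noteq> 0"
    using unit_cross_nz[OF ab u cons(1)[OF ab u] cons(3)[OF ab u]] by simp
  show ?thesis unfolding Uf_def
    by (intro continuous_intros X2c Y2c) (use Dnz in auto)
qed

lemma Uf_ends:
  assumes ab: "b>0" "a>b"
  shows "Uf a b 0 = -(qq a b/2)" "Uf a b pi = qq a b/2"
proof -
  note f = pq_facts[OF ab]
  have u1: "(1::real)^2 + 0^2 = 1" and u2: "(-1::real)^2 + 0^2 = 1" by simp_all
  have N1: "NN a b 1 0 = (pp a b)^2" and N2: "NN a b (-1) 0 = (pp a b)^2" by (simp_all add: NN_def)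
  have h1: "hh a b 1 0 > 0" unfolding hh_def using NN_gt(1)[OF ab u1] by simp
  have h2: "hh a b (-1) 0 > 0" unfolding hh_def using NN_gt(1)[OF ab u2] by simp
  have X1: "X2f a b 1 0 = -(qq a b/2)" unfolding X2f_def N1 rr_def using f(1) by (simp add: power2_eq_square)
  have Y1: "Y2f a b 1 0 = hh a b 1 0 / pp a b" unfolding Y2f_def N1 rr_def using f(1) by (simp add: power2_eq_square)
  have X2: "X2f a b (-1) 0 = qq a b/2" unfolding X2f_def N2 rr_def using f(1) by (simp add: power2_eq_square)
  have Y2: "Y2f a b (-1) 0 = -(hh a b (-1) 0 / pp a b)" unfolding Y2f_def N2 rr_def using f(1) by (simp add: power2_eq_square)
  show "Uf a b 0 = -(qq a b/2)" unfolding Uf_def using X1 Y1 h1 f(1) by simp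
  show "Uf a b pi = qq a b/2" unfolding Uf_def using X2 Y2 h2 f(1) by simp
qed

lemma inc_surj:
  assumes ab: "b>0" "a>b" and Z: "on_ellipse ((dl a b - b^2)/a) ((a^2 - dl a b)/b) Z"
  shows "\<exists>P1 P2 P3. three_periodic a b P1 P2 P3 \<and> Z = incenter P1 P2 P3"
proof -
  note f = pq_facts[OF ab]
  have a0: "a > 0" "b > 0" using ab by auto
  obtain zx zy where Zp: "Z = (zx,zy)" by (cases Z)
  define e where "e = a^2-b^2"
  have e0: "e > 0" unfolding e_def using ab by (simp add: power_strict_mono)
  define A1 where "A1 = qq a b*e/(2*a)"
  define B1 where "B1 = pp a b*e/(2*b)"
  have A1p: "A1 > 0" unfolding A1_def using f(2) e0 a0 by simp
  have B1p: "B1 > 0" unfolding B1_def using f(1) e0 a0 by simp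
  have E: "zx^2/A1^2 + zy^2/B1^2 = 1" using Z unfolding on_ellipse_def Zp A1_def B1_def e_def f(10) f(11) by simp
  have "zy^2/B1^2 \<ge> 0" by simp
  then have "zx^2/A1^2 \<le> 1" using E by linarith
  then have "zx^2 \<le> A1^2" using A1p by (simp add: divide_le_eq)
  then have "\<bar>zx\<bar> \<le> \<bar>A1\<bar>" using abs_le_square_iff[of zx A1] by simp
  then have "\<bar>zx\<bar> \<le> A1" using A1p by simp
  then have zb: "-A1 \<le> zx" "zx \<le> A1" by linarith+
  define U0 where "U0 = a*zx/e"
  have aA: "a*A1/e = qq a b/2" unfolding A1_def using a0 e0 by (simp add: field_simps)
  have "a*(-A1)/e \<le> U0" unfolding U0_def
    by (intro divide_right_mono mult_left_mono) (use zb a0 e0 in auto)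
  moreover have "U0 \<le> a*A1/e" unfolding U0_def
    by (intro divide_right_mono mult_left_mono) (use zb a0 e0 in auto)
  ultimately have "-(a*A1/e) \<le> U0" "U0 \<le> a*A1/e" by simp_all
  then have U0b: "-(qq a b/2) \<le> U0" "U0 \<le> qq a b/2" using aA by linarith+
  have i1: "Uf a b 0 \<le> U0" using Uf_ends(1)[OF ab] U0b(1) by linarith
  have i2: "U0 \<le> Uf a b pi" using Uf_ends(2)[OF ab] U0b(2) by linarith
  have pi0: "0 \<le> pi" using pi_gt_zero by linarith
  have "\<exists>t. 0 \<le> t \<and> t \<le> pi \<and> Uf a b t = U0"
    by (rule IVT'[OF i1 i2 pi0 cont_Uf[OF ab]])
  then obtain t where t: "0 \<le> t" "t \<le> pi" "Uf a b t = U0" by blast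
  define x where "x = cos t"
  define y where "y = sin t"
  have u: "x^2+y^2=1" unfolding x_def y_def by (simp add: sin_cos_squared_add2)
  define X2 where "X2 = X2f a b x y"
  define Y2 where "Y2 = Y2f a b x y"
  define X3 where "X3 = X3f a b x y"
  define Y3 where "Y3 = Y3f a b x y"
  have tp: "three_periodic a b (a*x,b*y) (a*X2,b*Y2) (a*X3,b*Y3)"
    unfolding X2_def Y2_def X3_def Y3_def using cons_tp[OF ab u] .
  have u23: "X2^2+Y2^2=1" "X3^2+Y3^2=1" unfolding X2_def Y2_def X3_def Y3_def using cons[OF ab u] by auto
  have H: "(X2-x)*(Y3-y) - (Y2-y)*(X3-x) \<noteq> 0"
     "pp a b*x*X2 + qq a b*y*Y2 = -(pp a b*qq a b/2)"
     "pp a b*x*X3 + qq a b*y*Y3 = -(pp a b*qq a b/2)"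
     "pp a b*X2*X3 + qq a b*Y2*Y3 = -(pp a b*qq a b/2)" using tp tp_iff[OF ab u u23] by auto
  define D where "D = x*Y2-y*X2"
  have Dn: "D \<noteq> 0" unfolding D_def using unit_cross_nz[OF ab u u23(1) H(2)] by simp
  define zx' where "zx' = e*x*X2*(Y2-y)/(a*D)"
  define zy' where "zy' = e*y*Y2*(X2-x)/(b*D)"
  have inc: "incenter (a*x,b*y) (a*X2,b*Y2) (a*X3,b*Y3) = (zx', zy')"
    unfolding inc_formula[OF ab u u23 tp] zx'_def zy'_def e_def D_def by (simp add: mult.commute)
  have "Uf a b t = x*X2*(Y2-y)/D" unfolding Uf_def x_def[symmetric] y_def[symmetric]
    X2_def[symmetric] Y2_def[symmetric] D_def by simp
  then have "x*X2*(Y2-y)/D = U0" using t(3) by simp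
  then have k: "x*X2*(Y2-y) = U0*D" using Dn by (simp add: field_simps)
  have "zx' = e*(x*X2*(Y2-y))/(a*D)" unfolding zx'_def by (simp add: mult.assoc)
  also have "\<dots> = e*(U0*D)/(a*D)" unfolding k ..
  also have "\<dots> = e*U0/a" using Dn by simp
  also have "\<dots> = zx" unfolding U0_def using a0 e0 by simp
  finally have zxe: "zx' = zx" .
  have "on_ellipse ((dl a b - b^2)/a) ((a^2 - dl a b)/b) (zx', zy')"
    using inc_on_pt[OF ab tp] unfolding inc .
  then have E': "zx'^2/A1^2 + zy'^2/B1^2 = 1" unfolding on_ellipse_def A1_def B1_def e_def f(10) f(11) by simp
  have E'': "zx^2/A1^2 + zy'^2/B1^2 = 1" using E' zxe by simp
  have "zy'^2/B1^2 = zy^2/B1^2" using E E'' by linarith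
  then have "zy'^2 = zy^2" using B1p by simp
  then have "zy' = zy \<or> zy' = -zy" by (simp add: power2_eq_iff)
  then show ?thesis
  proof
    assume "zy' = zy"
    then show ?thesis using tp inc zxe unfolding Zp by metis
  next
    assume zy: "zy' = -zy"
    have u': "x^2+(-y)^2=1" "X2^2+(-Y2)^2=1" "X3^2+(-Y3)^2=1" using u u23 by simp_all
    have cr': "(X2-x)*((-Y3)-(-y)) - ((-Y2)-(-y))*(X3-x) = -((X2-x)*(Y3-y) - (Y2-y)*(X3-x))"
      by (simp add: algebra_simps)
    have tp': "three_periodic a b (a*x,b*(-y)) (a*X2,b*(-Y2)) (a*X3,b*(-Y3))"
      using tp_iff[OF ab u'] H cr' by simp
    have "incenter (a*x,b*(-y)) (a*X2,b*(-Y2)) (a*X3,b*(-Y3))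
       = (e*x*X2*((-Y2)-(-y))/(a*(x*(-Y2)-(-y)*X2)), e*(-y)*(-Y2)*(X2-x)/(b*(x*(-Y2)-(-y)*X2)))"
      unfolding inc_formula[OF ab u' tp'] e_def ..
    also have "\<dots> = (zx', -zy')"
    proof -
      have r1: "(-Y2) - (-y) = -(Y2-y)" by simp
      have r2: "x*(-Y2) - (-y)*X2 = -D" unfolding D_def by simp
      have c1: "e*x*X2*((-Y2)-(-y))/(a*(x*(-Y2)-(-y)*X2)) = zx'" unfolding r1 r2 zx'_def by (simp only: mult_minus_right minus_divide_divide)
      have c2: "e*(-y)*(-Y2)*(X2-x)/(b*(x*(-Y2)-(-y)*X2)) = -zy'" unfolding r2 zy'_def by simp
      show ?thesis using c1 c2 by simp
    qed
    also have "\<dots> = Z" unfolding Zp zxe zy by simp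
    finally show ?thesis using tp' by metis
  qed
qed


theorem theorem1:
  fixes a b :: real
  assumes "a > b" and "b > 0"
  defines "\<delta> \<equiv> sqrt (a^4 - a^2 * b^2 + b^4)"
  shows "({incenter P1 P2 P3 | P1 P2 P3. three_periodic a b P1 P2 P3}
           = ellipse_set ((\<delta> - b^2) / a) ((a^2 - \<delta>) / b)) \<and>
         ((\<Union>{excenters P1 P2 P3 | P1 P2 P3. three_periodic a b P1 P2 P3})
           = ellipse_set ((b^2 + \<delta>) / a) ((a^2 + \<delta>) / b))"
proof -
  have dd: "\<delta> = dl a b" unfolding \<delta>_def dl_def ..
  have ab: "b > 0" "a > b" using assms(1,2) by auto
  have A: "{incenter P1 P2 P3 | P1 P2 P3. three_periodic a b P1 P2 P3}
           = ellipse_set ((\<delta> - b^2) / a) ((a^2 - \<delta>) / b)"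
  proof (intro equalityI subsetI)
    fix Z assume "Z \<in> {incenter P1 P2 P3 | P1 P2 P3. three_periodic a b P1 P2 P3}"
    then obtain P1 P2 P3 where tp: "three_periodic a b P1 P2 P3" and Z: "Z = incenter P1 P2 P3" by blast
    show "Z \<in> ellipse_set ((\<delta> - b^2) / a) ((a^2 - \<delta>) / b)"
      using inc_on_pt[OF ab tp] unfolding ellipse_set_def dd Z by simp
  next
    fix Z assume "Z \<in> ellipse_set ((\<delta> - b^2) / a) ((a^2 - \<delta>) / b)"
    then have "on_ellipse ((dl a b - b^2)/a) ((a^2 - dl a b)/b) Z" unfolding ellipse_set_def dd by simp
    then obtain P1 P2 P3 where "three_periodic a b P1 P2 P3" "Z = incenter P1 P2 P3"
      using inc_surj[OF ab] by blast
    then show "Z \<in> {incenter P1 P2 P3 | P1 P2 P3. three_periodic a b P1 P2 P3}" by blast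
  qed
  have B: "(\<Union>{excenters P1 P2 P3 | P1 P2 P3. three_periodic a b P1 P2 P3})
           = ellipse_set ((b^2 + \<delta>) / a) ((a^2 + \<delta>) / b)"
  proof (intro equalityI subsetI)
    fix Z assume "Z \<in> \<Union>{excenters P1 P2 P3 | P1 P2 P3. three_periodic a b P1 P2 P3}"
    then obtain P1 P2 P3 where tp: "three_periodic a b P1 P2 P3" and Z: "Z \<in> excenters P1 P2 P3" by blast
    have tp2: "three_periodic a b P2 P3 P1" using tp_rot[OF tp] .
    have tp3: "three_periodic a b P3 P1 P2" using tp_rot[OF tp2] .
    have r2: "trilinear_point 1 (-1) 1 P1 P2 P3 = trilinear_point (-1) 1 1 P2 P3 P1" by (rule tri_rot)
    have r3: "trilinear_point 1 1 (-1) P1 P2 P3 = trilinear_point (-1) 1 1 P3 P1 P2"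
      using tri_rot[of 1 1 "-1" P1 P2 P3] tri_rot[of 1 "-1" 1 P2 P3 P1] by (rule trans)
    have "on_ellipse ((b^2 + dl a b)/a) ((a^2 + dl a b)/b) Z"
      using Z exc_on_pt[OF ab tp] exc_on_pt[OF ab tp2] exc_on_pt[OF ab tp3] r2 r3
      unfolding excenters_def by auto
    then show "Z \<in> ellipse_set ((b^2 + \<delta>) / a) ((a^2 + \<delta>) / b)" unfolding ellipse_set_def dd by simp
  next
    fix Z assume "Z \<in> ellipse_set ((b^2 + \<delta>) / a) ((a^2 + \<delta>) / b)"
    then have "on_ellipse ((b^2 + dl a b)/a) ((a^2 + dl a b)/b) Z" unfolding ellipse_set_def dd by simp
    then obtain P1 P2 P3 where "three_periodic a b P1 P2 P3" "Z \<in> excenters P1 P2 P3"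
      using exc_surj[OF ab] by blast
    then show "Z \<in> \<Union>{excenters P1 P2 P3 | P1 P2 P3. three_periodic a b P1 P2 P3}" by blast
  qed
  show ?thesis using A B by simp
qed

end
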